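(* Let $\Lambda$ be the preprojective algebra of a finite graph $\Gamma$ without loops, and let $q=\bigoplus_{i\in I} q_i^{\oplus a_i}$ with nonnegative integers $a_i$. Let $x$ be a finite-dimensional $\Lambda$-module isomorphic to a submodule of $q$. If $f_1:x\to q$ and $f_2:x\to q$ are two monomorphisms of $\Lambda$-modules, then there exists an automorphism $g:q\to q$ of $\Lambda$-modules such that $f_2=g f_1$.
   Context: $\Gamma$ is a finite unoriented graph without loops (multiple edges allowed) with vertex set $I$; $\Lambda$ is its preprojective algebra over $\mathbb{C}$ (in the sense of Gelfand–Ponomarev). For $i\in I$, $s_i$ is the one-dimensional simple $\Lambda$-module at vertex $i$ and $q_i$ is its injective hull. *)

theory Defs
  imports Complex_Main "HOL-Library.Function_Algebras"
begin

text \<open>A finite graph without loops (multiple edges allowed) with vertex type 'i is encoded,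
as in Lusztig, by a finite set H (of elements of type 'h) of oriented edges of its double quiver, with source
and target maps, a fixed-point-free involution h to bar h reversing arrows, and an orientation
sign eps with eps (bar h) = - eps h.\<close>

type_synonym ('i,'h) graph = "'h set \<times> ('h \<Rightarrow> 'i) \<times> ('h \<Rightarrow> 'i) \<times> ('h \<Rightarrow> 'h) \<times> ('h \<Rightarrow> complex)"

definition garr :: "('i,'h) graph \<Rightarrow> 'h set" where "garr G = fst G"
definition gsrc :: "('i,'h) graph \<Rightarrow> 'h \<Rightarrow> 'i" where "gsrc G = fst (snd G)"
definition gtgt :: "('i,'h) graph \<Rightarrow> 'h \<Rightarrow> 'i" where "gtgt G = fst (snd (snd G))"
definition gbar :: "('i,'h) graph \<Rightarrow> 'h \<Rightarrow> 'h" where "gbar G = fst (snd (snd (snd G)))"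
definition geps :: "('i,'h) graph \<Rightarrow> 'h \<Rightarrow> complex" where "geps G = snd (snd (snd (snd G)))"

definition double_graph :: "('i::finite,'h) graph \<Rightarrow> bool" where
  "double_graph G \<longleftrightarrow> finite (garr G) \<and>
     (\<forall>h\<in>garr G. gbar G h \<in> garr G \<and> gbar G (gbar G h) = h \<and> gbar G h \<noteq> h \<and>
          gsrc G (gbar G h) = gtgt G h \<and> gsrc G h \<noteq> gtgt G h \<and>
          (geps G h = 1 \<or> geps G h = -1) \<and> geps G (gbar G h) = - geps G h)"

text \<open>A module: a C-vector space structure (scalar multiplication sc on the abelian group 'v),
a family of subspaces V i (the spaces e_i M; the module is their external direct sum) and
maps X h : V (src h) \<rightarrow> V (tgt h) satisfying the preprojective relations.\<close>

type_synonym ('i,'h,'v) rep = "(complex \<Rightarrow> 'v \<Rightarrow> 'v) \<times> ('i \<Rightarrow> 'v set) \<times> ('h \<Rightarrow> 'v \<Rightarrow> 'v)"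

definition rsc :: "('i,'h,'v) rep \<Rightarrow> complex \<Rightarrow> 'v \<Rightarrow> 'v" where "rsc M = fst M"
definition rsp :: "('i,'h,'v) rep \<Rightarrow> 'i \<Rightarrow> 'v set" where "rsp M = fst (snd M)"
definition rmap :: "('i,'h,'v) rep \<Rightarrow> 'h \<Rightarrow> 'v \<Rightarrow> 'v" where "rmap M = snd (snd M)"

definition lin_on :: "(complex \<Rightarrow> 'v \<Rightarrow> 'v) \<Rightarrow> (complex \<Rightarrow> 'w \<Rightarrow> 'w) \<Rightarrow> 'v set
    \<Rightarrow> ('v::ab_group_add \<Rightarrow> 'w::ab_group_add) \<Rightarrow> bool" where
  "lin_on s t S f \<longleftrightarrow> (\<forall>a\<in>S. \<forall>b\<in>S. f (a + b) = f a + f b) \<and> (\<forall>c. \<forall>a\<in>S. f (s c a) = t c (f a))"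

definition is_module :: "('i::finite,'h) graph \<Rightarrow> ('i,'h,'v::ab_group_add) rep \<Rightarrow> bool" where
  "is_module G M \<longleftrightarrow>
     vector_space (rsc M) \<and>
     (\<forall>i. module.subspace (rsc M) (rsp M i)) \<and>
     (\<forall>h\<in>garr G. rmap M h ` rsp M (gsrc G h) \<subseteq> rsp M (gtgt G h) \<and>
          lin_on (rsc M) (rsc M) (rsp M (gsrc G h)) (rmap M h)) \<and>
     (\<forall>i. \<forall>v\<in>rsp M i.
          (\<Sum>h\<in>{h\<in>garr G. gtgt G h = i}. rsc M (geps G h) (rmap M h (rmap M (gbar G h) v))) = 0)"

definition findim_module :: "('i::finite,'h,'v::ab_group_add) rep \<Rightarrow> bool" where
  "findim_module M \<longleftrightarrow> (\<forall>i. \<exists>B. finite B \<and> B \<subseteq> rsp M i \<and> module.span (rsc M) B = rsp M i)"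

definition is_hom :: "('i::finite,'h) graph \<Rightarrow> ('i,'h,'v::ab_group_add) rep
    \<Rightarrow> ('i,'h,'w::ab_group_add) rep \<Rightarrow> ('i \<Rightarrow> 'v \<Rightarrow> 'w) \<Rightarrow> bool" where
  "is_hom G M N f \<longleftrightarrow>
     (\<forall>i. lin_on (rsc M) (rsc N) (rsp M i) (f i) \<and> f i ` rsp M i \<subseteq> rsp N i) \<and>
     (\<forall>h\<in>garr G. \<forall>v\<in>rsp M (gsrc G h). f (gtgt G h) (rmap M h v) = rmap N h (f (gsrc G h) v))"

definition is_mono :: "('i::finite,'h) graph \<Rightarrow> ('i,'h,'v::ab_group_add) rep
    \<Rightarrow> ('i,'h,'w::ab_group_add) rep \<Rightarrow> ('i \<Rightarrow> 'v \<Rightarrow> 'w) \<Rightarrow> bool" where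
  "is_mono G M N f \<longleftrightarrow> is_hom G M N f \<and> (\<forall>i. inj_on (f i) (rsp M i))"

definition is_iso :: "('i::finite,'h) graph \<Rightarrow> ('i,'h,'v::ab_group_add) rep
    \<Rightarrow> ('i,'h,'w::ab_group_add) rep \<Rightarrow> ('i \<Rightarrow> 'v \<Rightarrow> 'w) \<Rightarrow> bool" where
  "is_iso G M N f \<longleftrightarrow> is_hom G M N f \<and> (\<forall>i. bij_betw (f i) (rsp M i) (rsp N i))"

definition is_submodule :: "('i::finite,'h) graph \<Rightarrow> ('i,'h,'v::ab_group_add) rep
    \<Rightarrow> ('i \<Rightarrow> 'v set) \<Rightarrow> bool" where
  "is_submodule G M U \<longleftrightarrow>
     (\<forall>i. module.subspace (rsc M) (U i) \<and> U i \<subseteq> rsp M i) \<and>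
     (\<forall>h\<in>garr G. rmap M h ` U (gsrc G h) \<subseteq> U (gtgt G h))"

definition simple_mod :: "'i \<Rightarrow> ('i,'h,complex) rep" where
  "simple_mod i = ((*), (\<lambda>j. if j = i then UNIV else {0}), (\<lambda>h v. 0))"

text \<open>Injectivity in the category of all Lambda-modules.  Test modules are taken with underlying
spaces inside the C-vector space nat \<Rightarrow> complex (of uncountable dimension); since Lambda has
countable dimension, by Baer's criterion this is the same as injectivity against all modules.\<close>

definition fun_sc :: "complex \<Rightarrow> (nat \<Rightarrow> complex) \<Rightarrow> (nat \<Rightarrow> complex)" where
  "fun_sc c f = (\<lambda>n. c * f n)"

definition is_injective :: "('i::finite,'h) graph \<Rightarrow> ('i,'h,'v::ab_group_add) rep \<Rightarrow> bool" where
  "is_injective G E \<longleftrightarrow>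
     (\<forall>(M :: ('i,'h,nat \<Rightarrow> complex) rep) (N :: ('i,'h,nat \<Rightarrow> complex) rep) u \<phi>.
        rsc M = fun_sc \<longrightarrow> rsc N = fun_sc \<longrightarrow> is_module G M \<longrightarrow> is_module G N \<longrightarrow>
        is_mono G M N u \<longrightarrow> is_hom G M E \<phi> \<longrightarrow>
        (\<exists>\<psi>. is_hom G N E \<psi> \<and> (\<forall>i. \<forall>v\<in>rsp M i. \<psi> i (u i v) = \<phi> i v)))"

definition is_injective_hull :: "('i::finite,'h) graph \<Rightarrow> ('i,'h,'w::ab_group_add) rep
    \<Rightarrow> ('i,'h,'v::ab_group_add) rep \<Rightarrow> ('i \<Rightarrow> 'w \<Rightarrow> 'v) \<Rightarrow> bool" where
  "is_injective_hull G S E \<iota> \<longleftrightarrow>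
     is_module G E \<and> is_injective G E \<and> is_mono G S E \<iota> \<and>
     (\<forall>U. is_submodule G E U \<longrightarrow> (\<exists>i. U i \<noteq> {0}) \<longrightarrow>
          (\<exists>i. \<exists>v\<in>U i. v \<noteq> 0 \<and> v \<in> \<iota> i ` rsp S i))"

text \<open>The direct sum of a_i copies of Q_i over all vertices i.  An element at vertex j is a
function on pairs (i,k) with k < a i, value in (Q i) at j, and zero elsewhere.\<close>

definition dsum_mod :: "('i \<Rightarrow> ('i,'h,'q::ab_group_add) rep) \<Rightarrow> ('i \<Rightarrow> nat)
    \<Rightarrow> ('i,'h,'i \<times> nat \<Rightarrow> 'q) rep" where
  "dsum_mod Q a =
     ((\<lambda>c \<phi> p. rsc (Q (fst p)) c (\<phi> p)),
      (\<lambda>j. {\<phi>. \<forall>p. (snd p < a (fst p) \<longrightarrow> \<phi> p \<in> rsp (Q (fst p)) j) \<and>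
                      (\<not> snd p < a (fst p) \<longrightarrow> \<phi> p = 0)}),
      (\<lambda>h \<phi> p. if snd p < a (fst p) then rmap (Q (fst p)) h (\<phi> p) else 0))"

end

theory Submission
  imports Defs "HOL-Library.Countable_Set"
begin
lemma rep_simps[simp]: "rsc (s, V, X) = s" "rsp (s, V, X) = V" "rmap (s, V, X) = X"
  by (simp_all add: rsc_def rsp_def rmap_def)

lemma mod_vs: "is_module G M \<Longrightarrow> vector_space (rsc M)" by (simp add: is_module_def)
lemma mod_sub: "is_module G M \<Longrightarrow> module.subspace (rsc M) (rsp M i)" by (simp add: is_module_def)
lemma mod_arr: "is_module G M \<Longrightarrow> h \<in> garr G \<Longrightarrow> rmap M h ` rsp M (gsrc G h) \<subseteq> rsp M (gtgt G h)"
  by (simp add: is_module_def)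
lemma mod_lin: "is_module G M \<Longrightarrow> h \<in> garr G \<Longrightarrow> lin_on (rsc M) (rsc M) (rsp M (gsrc G h)) (rmap M h)"
  by (simp add: is_module_def)
lemma mod_rel: "is_module G M \<Longrightarrow> v \<in> rsp M i \<Longrightarrow>
   (\<Sum>h\<in>{h\<in>garr G. gtgt G h = i}. rsc M (geps G h) (rmap M h (rmap M (gbar G h) v))) = 0"
  by (simp add: is_module_def)
lemma submod_sub: "is_submodule G M U \<Longrightarrow> module.subspace (rsc M) (U i)" by (simp add: is_submodule_def)
lemma submod_le: "is_submodule G M U \<Longrightarrow> U i \<subseteq> rsp M i" by (simp add: is_submodule_def)
lemma submod_arr: "is_submodule G M U \<Longrightarrow> h \<in> garr G \<Longrightarrow> rmap M h ` U (gsrc G h) \<subseteq> U (gtgt G h)"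
  by (simp add: is_submodule_def)
lemma hom_lin: "is_hom G M N f \<Longrightarrow> lin_on (rsc M) (rsc N) (rsp M i) (f i)" by (simp add: is_hom_def)
lemma hom_img: "is_hom G M N f \<Longrightarrow> f i ` rsp M i \<subseteq> rsp N i" by (simp add: is_hom_def)
lemma hom_arr: "is_hom G M N f \<Longrightarrow> h \<in> garr G \<Longrightarrow> v \<in> rsp M (gsrc G h) \<Longrightarrow>
   f (gtgt G h) (rmap M h v) = rmap N h (f (gsrc G h) v)" by (simp add: is_hom_def)

lemma sum_app: "(\<Sum>x\<in>A. f x) p = (\<Sum>x\<in>A. f x p)"
  by (induction A rule: infinite_finite_induct) auto

lemma vs_fun_sc: "vector_space fun_sc"
  by unfold_locales (auto simp: fun_sc_def algebra_simps)

definition ev :: "nat \<Rightarrow> nat \<Rightarrow> complex" where "ev n = (\<lambda>m. if m = n then 1 else 0)"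

lemma ev_inj: "ev n = ev m \<longleftrightarrow> n = m"
  by (metis ev_def one_neq_zero)

lemma indep_ev: "\<not> module.dependent fun_sc (ev ` A)"
proof -
  interpret F: vector_space fun_sc by (rule vs_fun_sc)
  show ?thesis
  unfolding F.independent_explicit_finite_subsets
  proof (intro allI impI ballI)
    fix S u v assume S: "S \<subseteq> ev ` A" "finite S" and sum0: "(\<Sum>v\<in>S. fun_sc (u v) v) = 0" and v: "v \<in> S"
    then obtain n where vn: "v = ev n" by auto
    have "(\<Sum>w\<in>S. fun_sc (u w) w) n = (\<Sum>w\<in>S. u w * w n)" by (simp add: sum_app fun_sc_def)
    also have "\<dots> = (\<Sum>w\<in>S. if w = v then u w else 0)"
    proof (rule sum.cong[OF refl])
      fix w assume "w \<in> S"
      then obtain m where "w = ev m" using S by auto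
      then show "u w * w n = (if w = v then u w else 0)" by (auto simp: vn ev_inj) (auto simp: ev_def)
    qed
    also have "\<dots> = u v" using v S by simp
    finally show "u v = 0" using sum0 by simp
  qed
qed

lemma countable_embed:
  assumes vs: "vector_space s" and cR: "countable R" and V: "V \<subseteq> module.span s R"
  shows "\<exists>T. Vector_Spaces.linear s fun_sc T \<and> inj_on T V"
proof -
  interpret vs: vector_space s by (rule vs)
  interpret P: vector_space_pair s fun_sc by (intro vector_space_pair.intro vs vs_fun_sc)
  obtain B where B: "B \<subseteq> R" "vs.independent B" "R \<subseteq> vs.span B"
    using vs.maximal_independent_subset[of R] by blast
  have cB: "countable B" using B(1) cR countable_subset by blast
  define T where "T = P.construct B (\<lambda>b. ev (to_nat_on B b))"
  have lin: "Vector_Spaces.linear s fun_sc T" unfolding T_def by (rule P.linear_construct[OF B(2)])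
  have Tb: "T b = ev (to_nat_on B b)" if "b \<in> B" for b
    unfolding T_def using P.construct_basis[OF B(2) that] .
  have img: "T ` B = ev ` (to_nat_on B ` B)" using Tb by (force simp: image_image)
  have indep: "\<not> module.dependent fun_sc (T ` B)" using img indep_ev by simp
  have injB: "inj_on T B"
    by (rule inj_onI) (metis Tb ev_inj cB to_nat_on_inj)
  have "inj_on T (vs.span B)" using P.linear_inj_on_span_iff_independent_image[OF lin indep] injB by simp
  moreover have "V \<subseteq> vs.span B" using V B(3) vs.span_mono vs.span_span by blast
  ultimately show ?thesis using lin inj_on_subset by blast
qed

lemma lin_on_zero:
  assumes "vector_space s" "module.subspace s S" "lin_on s t S f"
  shows "f 0 = 0"
proof -
  interpret vector_space s by fact
  have "0 \<in> S" using assms(2) subspace_0 by blast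
  then have "f (0 + 0) = f 0 + f 0" using assms(3) unfolding lin_on_def by blast
  then show ?thesis by simp
qed

lemma lin_on_neg:
  assumes "vector_space s" "module.subspace s S" "lin_on s t S f" "x \<in> S"
  shows "f (- x) = - f x"
proof -
  interpret vector_space s by fact
  have "- x \<in> S" using assms subspace_neg by blast
  then have "f (- x + x) = f (- x) + f x" using assms unfolding lin_on_def by blast
  then show ?thesis using lin_on_zero[OF assms(1,2,3)] by (simp add: eq_neg_iff_add_eq_0)
qed

lemma lin_on_diff:
  assumes "vector_space s" "module.subspace s S" "lin_on s t S f" "x \<in> S" "y \<in> S"
  shows "f (x - y) = f x - f y"
proof -
  interpret vector_space s by fact
  have "- y \<in> S" using assms subspace_neg by blast
  then have "f (x + - y) = f x + f (- y)" using assms unfolding lin_on_def by blast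
  then show ?thesis using lin_on_neg[OF assms(1,2,3,5)] by simp
qed

lemma lin_on_sum:
  assumes "vector_space s" "module.subspace s S" "lin_on s t S f" "\<And>x. x \<in> A \<Longrightarrow> g x \<in> S"
  shows "f (sum g A) = (\<Sum>x\<in>A. f (g x))"
  using assms(4)
proof (induction A rule: infinite_finite_induct)
  case (infinite A) then show ?case using lin_on_zero[OF assms(1,2,3)] by simp
next
  case empty then show ?case using lin_on_zero[OF assms(1,2,3)] by simp
next
  case (insert x F)
  interpret vector_space s by fact
  have sF: "sum g F \<in> S" by (rule subspace_sum[OF assms(2)]) (use insert.prems in auto)
  have gx: "g x \<in> S" using insert.prems by simp
  have "f (sum g (insert x F)) = f (g x + sum g F)" using insert.hyps by simp
  also have "\<dots> = f (g x) + f (sum g F)" using assms(3) gx sF unfolding lin_on_def by blast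
  also have "\<dots> = (\<Sum>x\<in>insert x F. f (g x))" using insert.hyps insert.IH insert.prems by simp
  finally show ?case .
qed

lemma lin_on_mono: "lin_on s t S f \<Longrightarrow> T \<subseteq> S \<Longrightarrow> lin_on s t T f"
  unfolding lin_on_def by blast

lemma linear_lin_on: "Vector_Spaces.linear s t f \<Longrightarrow> lin_on s t S f"
  unfolding lin_on_def Vector_Spaces.linear_iff by blast

lemma dg_bar:
  assumes "double_graph G" "h \<in> garr G"
  shows "gbar G h \<in> garr G" "gsrc G (gbar G h) = gtgt G h" "gtgt G (gbar G h) = gsrc G h"
    "gbar G (gbar G h) = h"
proof -
  show 1: "gbar G h \<in> garr G" "gsrc G (gbar G h) = gtgt G h" "gbar G (gbar G h) = h"
    using assms unfolding double_graph_def by auto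
  have "gsrc G (gbar G (gbar G h)) = gtgt G (gbar G h)"
    using assms 1 unfolding double_graph_def by blast
  then show "gtgt G (gbar G h) = gsrc G h" using 1 by simp
qed

definition transport :: "('i,'h) graph \<Rightarrow> ('i,'h,'v::ab_group_add) rep \<Rightarrow> ('i \<Rightarrow> 'v \<Rightarrow> nat \<Rightarrow> complex)
    \<Rightarrow> ('i,'h,nat \<Rightarrow> complex) rep" where
  "transport G N T = (fun_sc, (\<lambda>k. T k ` rsp N k),
     (\<lambda>h w. T (gtgt G h) (rmap N h (inv_into (rsp N (gsrc G h)) (T (gsrc G h)) w))))"

lemma transport_simps:
  "rsc (transport G N T) = fun_sc" "rsp (transport G N T) k = T k ` rsp N k"
  "rmap (transport G N T) h w = T (gtgt G h) (rmap N h (inv_into (rsp N (gsrc G h)) (T (gsrc G h)) w))"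
  by (simp_all add: transport_def rsc_def rsp_def rmap_def)

lemma transport_rmap:
  assumes "inj_on (T (gsrc G h)) (rsp N (gsrc G h))" "x \<in> rsp N (gsrc G h)"
  shows "rmap (transport G N T) h (T (gsrc G h) x) = T (gtgt G h) (rmap N h x)"
  using assms by (simp add: transport_simps)

lemma transport_module:
  fixes G :: "('i::finite,'h) graph" and N :: "('i,'h,'v::ab_group_add) rep"
  assumes dg: "double_graph G" and modN: "is_module G N"
    and lin: "\<And>k. Vector_Spaces.linear (rsc N) fun_sc (T k)" and inj: "\<And>k. inj_on (T k) (rsp N k)"
  shows "is_module G (transport G N T)"
proof -
  interpret N: vector_space "rsc N" using mod_vs[OF modN] .
  interpret P: vector_space_pair "rsc N" fun_sc by (intro vector_space_pair.intro N.vector_space_axioms vs_fun_sc)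
  have subN: "N.subspace (rsp N k)" for k using mod_sub[OF modN] .
  have arrN: "rmap N h ` rsp N (gsrc G h) \<subseteq> rsp N (gtgt G h)"
     "lin_on (rsc N) (rsc N) (rsp N (gsrc G h)) (rmap N h)" if "h \<in> garr G" for h
    using mod_arr[OF modN that] mod_lin[OF modN that] by auto
  have relN: "(\<Sum>h\<in>{h\<in>garr G. gtgt G h = i}. rsc N (geps G h) (rmap N h (rmap N (gbar G h) v))) = 0"
    if "v \<in> rsp N i" for i v using mod_rel[OF modN that] .
  have Tadd: "T k (x + y) = T k x + T k y" for k x y using lin[of k] Vector_Spaces.linear_iff by blast
  have Tsc: "T k (rsc N c x) = fun_sc c (T k x)" for k c x using lin[of k] Vector_Spaces.linear_iff by blast
  have tr: "rmap (transport G N T) h (T (gsrc G h) x) = T (gtgt G h) (rmap N h x)"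
    if "x \<in> rsp N (gsrc G h)" for h x using inj that by (simp add: transport_simps inv_into_f_f)
  have "vector_space fun_sc" by (rule vs_fun_sc)
  moreover have "module.subspace fun_sc (rsp (transport G N T) i)" for i
    unfolding transport_simps by (rule P.linear_subspace_image[OF lin subN])
  moreover have "rmap (transport G N T) h ` rsp (transport G N T) (gsrc G h) \<subseteq> rsp (transport G N T) (gtgt G h)
     \<and> lin_on fun_sc fun_sc (rsp (transport G N T) (gsrc G h)) (rmap (transport G N T) h)"
    if h: "h \<in> garr G" for h
  proof
    show "rmap (transport G N T) h ` rsp (transport G N T) (gsrc G h) \<subseteq> rsp (transport G N T) (gtgt G h)"
      using arrN[OF h] tr by (auto simp: transport_simps(2))
    show "lin_on fun_sc fun_sc (rsp (transport G N T) (gsrc G h)) (rmap (transport G N T) h)"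
      unfolding lin_on_def transport_simps(2)
    proof (intro conjI ballI allI)
      fix a b assume a: "a \<in> T (gsrc G h) ` rsp N (gsrc G h)" and b: "b \<in> T (gsrc G h) ` rsp N (gsrc G h)"
      then obtain x y where xy: "x \<in> rsp N (gsrc G h)" "y \<in> rsp N (gsrc G h)" "a = T (gsrc G h) x" "b = T (gsrc G h) y"
        by auto
      have xy2: "x + y \<in> rsp N (gsrc G h)" using xy subN N.subspace_add by blast
      have "rmap (transport G N T) h (a + b) = rmap (transport G N T) h (T (gsrc G h) (x + y))"
        using xy Tadd by simp
      also have "\<dots> = T (gtgt G h) (rmap N h (x + y))" by (rule tr[OF xy2])
      also have "\<dots> = T (gtgt G h) (rmap N h x + rmap N h y)"
        using arrN(2)[OF h] xy unfolding lin_on_def by simp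
      also have "\<dots> = rmap (transport G N T) h a + rmap (transport G N T) h b"
        using Tadd tr xy by simp
      finally show "rmap (transport G N T) h (a + b) = rmap (transport G N T) h a + rmap (transport G N T) h b" .
    next
      fix c a assume a: "a \<in> T (gsrc G h) ` rsp N (gsrc G h)"
      then obtain x where x: "x \<in> rsp N (gsrc G h)" "a = T (gsrc G h) x" by auto
      have x2: "rsc N c x \<in> rsp N (gsrc G h)" using x subN N.subspace_scale by blast
      have "rmap (transport G N T) h (fun_sc c a) = rmap (transport G N T) h (T (gsrc G h) (rsc N c x))"
        using x Tsc by simp
      also have "\<dots> = T (gtgt G h) (rmap N h (rsc N c x))" by (rule tr[OF x2])
      also have "\<dots> = T (gtgt G h) (rsc N c (rmap N h x))"
        using arrN(2)[OF h] x unfolding lin_on_def by simp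
      also have "\<dots> = fun_sc c (rmap (transport G N T) h a)"
        using Tsc tr x by simp
      finally show "rmap (transport G N T) h (fun_sc c a) = fun_sc c (rmap (transport G N T) h a)" .
    qed
  qed
  moreover have "(\<Sum>h\<in>{h\<in>garr G. gtgt G h = i}. fun_sc (geps G h)
        (rmap (transport G N T) h (rmap (transport G N T) (gbar G h) v))) = 0"
    if v: "v \<in> rsp (transport G N T) i" for i v
  proof -
    obtain x where x: "x \<in> rsp N i" "v = T i x" using v by (auto simp: transport_simps)
    have "(\<Sum>h\<in>{h\<in>garr G. gtgt G h = i}. fun_sc (geps G h)
        (rmap (transport G N T) h (rmap (transport G N T) (gbar G h) v)))
      = (\<Sum>h\<in>{h\<in>garr G. gtgt G h = i}. T i (rsc N (geps G h) (rmap N h (rmap N (gbar G h) x))))"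
    proof (rule sum.cong[OF refl])
      fix h assume "h \<in> {h\<in>garr G. gtgt G h = i}"
      then have h: "h \<in> garr G" "gtgt G h = i" by auto
      note b = dg_bar[OF dg h(1)]
      have x1: "x \<in> rsp N (gsrc G (gbar G h))" using x b h by simp
      have 1: "rmap (transport G N T) (gbar G h) v = T (gsrc G h) (rmap N (gbar G h) x)"
        using tr[OF x1] b x h by simp
      have x2: "rmap N (gbar G h) x \<in> rsp N (gsrc G h)" using arrN[OF b(1)] x1 b by auto
      have 2: "rmap (transport G N T) h (T (gsrc G h) (rmap N (gbar G h) x)) = T i (rmap N h (rmap N (gbar G h) x))"
        using tr[OF x2] h by simp
      show "fun_sc (geps G h) (rmap (transport G N T) h (rmap (transport G N T) (gbar G h) v)) =
         T i (rsc N (geps G h) (rmap N h (rmap N (gbar G h) x)))" using 1 2 Tsc by simp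
    qed
    also have "\<dots> = T i (\<Sum>h\<in>{h\<in>garr G. gtgt G h = i}. rsc N (geps G h) (rmap N h (rmap N (gbar G h) x)))"
      by (simp only: P.linear_sum[OF lin])
    also have "\<dots> = 0" using relN[OF x(1)] P.linear_0[OF lin] by simp
    finally show ?thesis .
  qed
  ultimately show ?thesis unfolding is_module_def transport_simps(1) by blast
qed

lemma transport_submodule:
  fixes G :: "('i::finite,'h) graph" and N :: "('i,'h,'v::ab_group_add) rep"
  assumes modN: "is_module G N" and sub: "is_submodule G N U"
    and lin: "\<And>k. Vector_Spaces.linear (rsc N) fun_sc (T k)" and inj: "\<And>k. inj_on (T k) (rsp N k)"
  shows "is_submodule G (transport G N T) (\<lambda>k. T k ` U k)"
proof -
  interpret N: vector_space "rsc N" using mod_vs[OF modN] .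
  interpret P: vector_space_pair "rsc N" fun_sc by (intro vector_space_pair.intro N.vector_space_axioms vs_fun_sc)
  have U: "N.subspace (U k)" "U k \<subseteq> rsp N k" for k using submod_sub[OF sub] submod_le[OF sub] by auto
  have UA: "rmap N h ` U (gsrc G h) \<subseteq> U (gtgt G h)" if "h \<in> garr G" for h
    using submod_arr[OF sub that] .
  have tr: "rmap (transport G N T) h (T (gsrc G h) x) = T (gtgt G h) (rmap N h x)"
    if "x \<in> rsp N (gsrc G h)" for h x using inj that by (simp add: transport_simps inv_into_f_f)
  show ?thesis unfolding is_submodule_def transport_simps(1,2)
  proof (intro conjI allI ballI)
    fix i show "module.subspace fun_sc (T i ` U i)" by (rule P.linear_subspace_image[OF lin U(1)])
    show "T i ` U i \<subseteq> T i ` rsp N i" using U(2) by auto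
  next
    fix h assume h: "h \<in> garr G"
    show "rmap (transport G N T) h ` T (gsrc G h) ` U (gsrc G h) \<subseteq> T (gtgt G h) ` U (gtgt G h)"
    proof
      fix y assume "y \<in> rmap (transport G N T) h ` T (gsrc G h) ` U (gsrc G h)"
      then obtain x where x: "x \<in> U (gsrc G h)" and y: "y = rmap (transport G N T) h (T (gsrc G h) x)"
        by blast
      have xN: "x \<in> rsp N (gsrc G h)" using x U(2) by blast
      have "rmap N h x \<in> U (gtgt G h)" using UA[OF h] x by blast
      then show "y \<in> T (gtgt G h) ` U (gtgt G h)"
        using tr[OF xN] y by simp
    qed
  qed
qed

lemma sub_module:
  assumes "is_module G M" "is_submodule G M U"
  shows "is_module G (rsc M, U, rmap M)"
proof -
  have A: "vector_space (rsc M)" "\<And>i. module.subspace (rsc M) (U i)" "\<And>i. U i \<subseteq> rsp M i"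
    "\<And>h. h \<in> garr G \<Longrightarrow> rmap M h ` U (gsrc G h) \<subseteq> U (gtgt G h)"
    "\<And>h. h \<in> garr G \<Longrightarrow> lin_on (rsc M) (rsc M) (rsp M (gsrc G h)) (rmap M h)"
    "\<And>i v. v \<in> rsp M i \<Longrightarrow> (\<Sum>h\<in>{h\<in>garr G. gtgt G h = i}. rsc M (geps G h) (rmap M h (rmap M (gbar G h) v))) = 0"
    using mod_vs[OF assms(1)] submod_sub[OF assms(2)] submod_le[OF assms(2)] submod_arr[OF assms(2)]
      mod_lin[OF assms(1)] mod_rel[OF assms(1)] by auto
  show ?thesis unfolding is_module_def rep_simps
  proof (intro conjI allI ballI)
    show "vector_space (rsc M)" by (rule A(1))
  next
    fix i show "module.subspace (rsc M) (U i)" by (rule A(2))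
  next
    fix h assume h: "h \<in> garr G"
    show "rmap M h ` U (gsrc G h) \<subseteq> U (gtgt G h)" by (rule A(4)[OF h])
  next
    fix h assume h: "h \<in> garr G"
    show "lin_on (rsc M) (rsc M) (U (gsrc G h)) (rmap M h)" by (rule lin_on_mono[OF A(5)[OF h] A(3)])
  next
    fix i v assume "v \<in> U i"
    then show "(\<Sum>h\<in>{h\<in>garr G. gtgt G h = i}. rsc M (geps G h) (rmap M h (rmap M (gbar G h) v))) = 0"
      using A(3,6) by blast
  qed
qed

lemma inj_ext:
  fixes G :: "('i::finite,'h) graph" and N :: "('i,'h,'v::ab_group_add) rep"
    and Q' :: "('i,'h,'q::ab_group_add) rep"
  assumes dg: "double_graph G" and injQ: "is_injective G Q'"
    and modN: "is_module G N"
    and cnt: "\<And>k. \<exists>R. countable R \<and> rsp N k \<subseteq> module.span (rsc N) R"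
    and sub: "is_submodule G N U"
    and hom: "is_hom G (rsc N, U, rmap N) Q' \<phi>"
  shows "\<exists>\<chi>. is_hom G N Q' \<chi> \<and> (\<forall>k. \<forall>x\<in>U k. \<chi> k x = \<phi> k x)"
proof -
  interpret N: vector_space "rsc N" using mod_vs[OF modN] .
  have "\<forall>k. \<exists>T. Vector_Spaces.linear (rsc N) fun_sc T \<and> inj_on T (rsp N k)"
    using countable_embed[OF N.vector_space_axioms] cnt by metis
  then obtain T where lin: "\<And>k. Vector_Spaces.linear (rsc N) fun_sc (T k)"
    and inj: "\<And>k. inj_on (T k) (rsp N k)" by metis
  have Tadd: "T k (x + y) = T k x + T k y" for k x y using lin[of k] Vector_Spaces.linear_iff by blast
  have Tsc: "T k (rsc N c x) = fun_sc c (T k x)" for k c x using lin[of k] Vector_Spaces.linear_iff by blast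
  have U: "N.subspace (U k)" "U k \<subseteq> rsp N k" for k using submod_sub[OF sub] submod_le[OF sub] by auto
  have UA: "rmap N h ` U (gsrc G h) \<subseteq> U (gtgt G h)" if "h \<in> garr G" for h
    using submod_arr[OF sub that] .
  have injU: "inj_on (T k) (U k)" for k using inj U(2) inj_on_subset by blast
  define N' where "N' = transport G N T"
  define M' where "M' = (fun_sc, (\<lambda>k. T k ` U k), rmap N')"
  have tr: "rmap N' h (T (gsrc G h) x) = T (gtgt G h) (rmap N h x)"
    if "x \<in> rsp N (gsrc G h)" for h x using inj that by (simp add: N'_def transport_simps inv_into_f_f)
  have modN': "is_module G N'" unfolding N'_def by (rule transport_module[OF dg modN lin inj])
  have subM: "is_submodule G N' (\<lambda>k. T k ` U k)"
    unfolding N'_def by (rule transport_submodule[OF modN sub lin inj])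
  have rscN': "rsc N' = fun_sc" by (simp add: N'_def transport_simps)
  have rspN': "rsp N' k = T k ` rsp N k" for k by (simp add: N'_def transport_simps)
  have modM': "is_module G M'" unfolding M'_def using sub_module[OF modN' subM] rscN' by simp
  have mono: "is_mono G M' N' (\<lambda>k w. w)"
    unfolding is_mono_def is_hom_def M'_def rep_simps rscN' rspN'
  proof (intro conjI allI ballI)
    fix i show "lin_on fun_sc fun_sc (T i ` U i) (\<lambda>w. w)" by (simp add: lin_on_def)
    show "(\<lambda>w. w) ` T i ` U i \<subseteq> T i ` rsp N i" using U(2) by auto
    show "inj_on (\<lambda>w. w) (T i ` U i)" by simp
  qed simp
  define \<phi>' where "\<phi>' = (\<lambda>k w. \<phi> k (inv_into (U k) (T k) w))"
  have \<phi>'T: "\<phi>' k (T k x) = \<phi> k x" if "x \<in> U k" for k x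
    using injU that by (simp add: \<phi>'_def inv_into_f_f)
  have homphi: "\<forall>i. lin_on (rsc N) (rsc Q') (U i) (\<phi> i) \<and> \<phi> i ` U i \<subseteq> rsp Q' i"
    "\<forall>h\<in>garr G. \<forall>v\<in>U (gsrc G h). \<phi> (gtgt G h) (rmap N h v) = rmap Q' h (\<phi> (gsrc G h) v)"
    using hom_lin[OF hom] hom_img[OF hom] hom_arr[OF hom] by auto
  have homphi': "is_hom G M' Q' \<phi>'"
    unfolding is_hom_def M'_def rep_simps
  proof (intro conjI allI ballI)
    fix i
    show "lin_on fun_sc (rsc Q') (T i ` U i) (\<phi>' i)"
      unfolding lin_on_def
    proof (intro conjI allI ballI)
      fix a b assume "a \<in> T i ` U i" "b \<in> T i ` U i"
      then obtain x y where xy: "x \<in> U i" "y \<in> U i" "a = T i x" "b = T i y" by auto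
      have "x + y \<in> U i" using xy U(1) N.subspace_add by blast
      then show "\<phi>' i (a + b) = \<phi>' i a + \<phi>' i b"
        using xy homphi(1) \<phi>'T Tadd[symmetric] by (simp add: lin_on_def)
    next
      fix c a assume "a \<in> T i ` U i"
      then obtain x where x: "x \<in> U i" "a = T i x" by auto
      have "rsc N c x \<in> U i" using x U(1) N.subspace_scale by blast
      then show "\<phi>' i (fun_sc c a) = rsc Q' c (\<phi>' i a)"
        using x homphi(1) \<phi>'T Tsc[symmetric] by (simp add: lin_on_def)
    qed
    show "\<phi>' i ` T i ` U i \<subseteq> rsp Q' i" proof - have "\<phi> i ` U i \<subseteq> rsp Q' i" using homphi(1) by blast then show ?thesis using \<phi>'T by auto qed
  next
    fix h v assume h: "h \<in> garr G" and v: "v \<in> T (gsrc G h) ` U (gsrc G h)"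
    then obtain x where x: "x \<in> U (gsrc G h)" "v = T (gsrc G h) x" by auto
    have x2: "rmap N h x \<in> U (gtgt G h)" using UA[OF h] x by auto
    have xN: "x \<in> rsp N (gsrc G h)" using x U(2) by blast
    have "\<phi>' (gtgt G h) (rmap N' h v) = \<phi>' (gtgt G h) (T (gtgt G h) (rmap N h x))"
      using tr[OF xN] x by simp
    also have "\<dots> = \<phi> (gtgt G h) (rmap N h x)" using \<phi>'T[OF x2] .
    also have "\<dots> = rmap Q' h (\<phi> (gsrc G h) x)" using homphi(2) h x by blast
    also have "\<dots> = rmap Q' h (\<phi>' (gsrc G h) v)" using \<phi>'T[OF x(1)] x(2) by simp
    finally show "\<phi>' (gtgt G h) (rmap N' h v) = rmap Q' h (\<phi>' (gsrc G h) v)" .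
  qed
  have inj_rule: "\<And>(M::('i,'h,nat \<Rightarrow> complex) rep) (N::('i,'h,nat \<Rightarrow> complex) rep) u \<phi>.
        rsc M = fun_sc \<Longrightarrow> rsc N = fun_sc \<Longrightarrow> is_module G M \<Longrightarrow> is_module G N \<Longrightarrow>
        is_mono G M N u \<Longrightarrow> is_hom G M Q' \<phi> \<Longrightarrow>
        (\<exists>\<psi>. is_hom G N Q' \<psi> \<and> (\<forall>i. \<forall>v\<in>rsp M i. \<psi> i (u i v) = \<phi> i v))"
    using injQ unfolding is_injective_def by blast
  have "\<exists>\<psi>. is_hom G N' Q' \<psi> \<and> (\<forall>i. \<forall>v\<in>rsp M' i. \<psi> i ((\<lambda>k w. w) i v) = \<phi>' i v)"
    by (rule inj_rule[OF _ rscN' modM' modN' mono homphi']) (simp add: M'_def)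
  then obtain \<psi> where psi: "is_hom G N' Q' \<psi>" "\<And>i v. v \<in> T i ` U i \<Longrightarrow> \<psi> i v = \<phi>' i v"
    unfolding M'_def by auto
  have psih: "\<forall>i. lin_on fun_sc (rsc Q') (T i ` rsp N i) (\<psi> i) \<and> \<psi> i ` (T i ` rsp N i) \<subseteq> rsp Q' i"
    "\<forall>h\<in>garr G. \<forall>v\<in>T (gsrc G h) ` rsp N (gsrc G h). \<psi> (gtgt G h) (rmap N' h v) = rmap Q' h (\<psi> (gsrc G h) v)"
    using hom_lin[OF psi(1)] hom_img[OF psi(1)] hom_arr[OF psi(1)] unfolding rscN' rspN' by auto
  define \<chi> where "\<chi> = (\<lambda>k x. \<psi> k (T k x))"
  have "is_hom G N Q' \<chi>"
    unfolding is_hom_def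
  proof (intro conjI allI ballI)
    fix i
    show "lin_on (rsc N) (rsc Q') (rsp N i) (\<chi> i)"
      unfolding lin_on_def \<chi>_def
    proof (intro conjI allI ballI)
      fix x y assume "x \<in> rsp N i" "y \<in> rsp N i"
      then show "\<psi> i (T i (x + y)) = \<psi> i (T i x) + \<psi> i (T i y)"
        using psih(1) Tadd by (simp add: lin_on_def)
    next
      fix c x assume "x \<in> rsp N i"
      then show "\<psi> i (T i (rsc N c x)) = rsc Q' c (\<psi> i (T i x))"
        using psih(1) Tsc by (simp add: lin_on_def)
    qed
    show "\<chi> i ` rsp N i \<subseteq> rsp Q' i" using psih(1) by (auto simp: \<chi>_def)
  next
    fix h v assume h: "h \<in> garr G" and v: "v \<in> rsp N (gsrc G h)"
    show "\<chi> (gtgt G h) (rmap N h v) = rmap Q' h (\<chi> (gsrc G h) v)"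
    proof -
      have "T (gsrc G h) v \<in> T (gsrc G h) ` rsp N (gsrc G h)" using v by blast
      then have "\<psi> (gtgt G h) (rmap N' h (T (gsrc G h) v)) = rmap Q' h (\<psi> (gsrc G h) (T (gsrc G h) v))"
        using psih(2) h by blast
      then show ?thesis using tr[OF v] unfolding \<chi>_def by simp
    qed
  qed
  moreover have "\<chi> k x = \<phi> k x" if "x \<in> U k" for k x
    using psi(2) \<phi>'T that by (simp add: \<chi>_def)
  ultimately show ?thesis by blast
qed

lemma lin_span:
  assumes vs: "vector_space s" and V: "module.subspace s V" and SV: "S \<subseteq> V"
    and lin: "lin_on s s V f" and fS: "f ` S \<subseteq> module.span s T" and x: "x \<in> module.span s S"
  shows "x \<in> V \<and> f x \<in> module.span s T"
proof -
  interpret vector_space s by fact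
  have sub: "subspace {x. x \<in> V \<and> f x \<in> span T}"
  proof (rule subspaceI)
    show "0 \<in> {x. x \<in> V \<and> f x \<in> span T}"
      using subspace_0[OF V] lin_on_zero[OF vs V lin] span_zero by simp
  next
    fix x y assume "x \<in> {x. x \<in> V \<and> f x \<in> span T}" "y \<in> {x. x \<in> V \<and> f x \<in> span T}"
    then show "x + y \<in> {x. x \<in> V \<and> f x \<in> span T}"
      using subspace_add[OF V] lin span_add unfolding lin_on_def by auto
  next
    fix c x assume "x \<in> {x. x \<in> V \<and> f x \<in> span T}"
    then show "s c x \<in> {x. x \<in> V \<and> f x \<in> span T}"
      using subspace_scale[OF V] lin span_scale unfolding lin_on_def by auto
  qed
  show ?thesis
    using span_induct[OF x, of "\<lambda>x. x \<in> V \<and> f x \<in> span T"] sub SV fS by auto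
qed

fun pv :: "('i,'h,'v) rep \<Rightarrow> 'v \<Rightarrow> 'h list \<Rightarrow> 'v" where
  "pv M v [] = v"
| "pv M v (h # hs) = rmap M h (pv M v hs)"

fun pathok :: "('i,'h) graph \<Rightarrow> 'i \<Rightarrow> 'h list \<Rightarrow> 'i \<Rightarrow> bool" where
  "pathok G j [] k \<longleftrightarrow> j = k"
| "pathok G j (h # hs) k \<longleftrightarrow> h \<in> garr G \<and> gtgt G h = k \<and> pathok G j hs (gsrc G h)"

lemma pathok_lists: "pathok G j hs k \<Longrightarrow> hs \<in> lists (garr G)"
  by (induction hs arbitrary: k) auto

lemma pathok_in:
  assumes "is_module G M" "v \<in> rsp M j"
  shows "pathok G j hs k \<Longrightarrow> pv M v hs \<in> rsp M k"
proof (induction hs arbitrary: k)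
  case Nil then show ?case using assms by simp
next
  case (Cons h hs)
  then have "pv M v hs \<in> rsp M (gsrc G h)" "h \<in> garr G" "gtgt G h = k" by auto
  then show ?case using mod_arr[OF assms(1)] by auto
qed

lemma cyclic_countable:
  fixes G :: "('i::finite,'h) graph" and M :: "('i,'h,'v::ab_group_add) rep"
  assumes modM: "is_module G M" and fin: "finite (garr G)" and v: "v \<in> rsp M j"
  shows "\<exists>C. is_submodule G M C \<and> v \<in> C j \<and> (\<forall>k. \<exists>R. countable R \<and> C k \<subseteq> module.span (rsc M) R)"
proof -
  interpret vector_space "rsc M" using mod_vs[OF modM] .
  define R where "R = (\<lambda>k. {pv M v hs | hs. pathok G j hs k})"
  define C where "C = (\<lambda>k. span (R k))"
  have RM: "R k \<subseteq> rsp M k" for k using pathok_in[OF modM v] by (auto simp: R_def)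
  have CM: "C k \<subseteq> rsp M k" for k unfolding C_def using span_minimal[OF RM mod_sub[OF modM]] .
  have cR: "countable (R k)" for k
  proof -
    have "R k \<subseteq> pv M v ` lists (garr G)"
    proof
      fix y assume "y \<in> R k"
      then obtain hs where "pathok G j hs k" "y = pv M v hs" by (auto simp: R_def)
      then show "y \<in> pv M v ` lists (garr G)" by (intro rev_image_eqI pathok_lists) auto
    qed
    moreover have "countable (pv M v ` lists (garr G))" using fin by (simp add: countable_finite)
    ultimately show ?thesis using countable_subset by blast
  qed
  have "is_submodule G M C"
    unfolding is_submodule_def
  proof (intro conjI allI ballI)
    fix i show "subspace (C i)" by (simp add: C_def)
    show "C i \<subseteq> rsp M i" by (rule CM)
  next
    fix h assume h: "h \<in> garr G"
    have "rmap M h ` R (gsrc G h) \<subseteq> span (R (gtgt G h))"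
    proof
      fix y assume "y \<in> rmap M h ` R (gsrc G h)"
      then obtain hs where "pathok G j hs (gsrc G h)" "y = rmap M h (pv M v hs)" by (auto simp: R_def)
      then have "y \<in> R (gtgt G h)" using h unfolding R_def by (intro CollectI exI[of _ "h # hs"]) auto
      then show "y \<in> span (R (gtgt G h))" using span_base by blast
    qed
    then show "rmap M h ` C (gsrc G h) \<subseteq> C (gtgt G h)"
      using lin_span[OF mod_vs[OF modM] mod_sub[OF modM] RM mod_lin[OF modM h]] unfolding C_def by blast
  qed
  moreover have "v \<in> C j"
  proof -
    have "v \<in> R j" unfolding R_def by (intro CollectI exI[of _ "[]"]) simp
    then show ?thesis unfolding C_def using span_base by blast
  qed
  moreover have "\<forall>k. \<exists>R. countable R \<and> C k \<subseteq> span R" using cR unfolding C_def by blast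
  ultimately show ?thesis by blast
qed

locale hull_setup =
  fixes G :: "('i::finite,'h) graph" and Q :: "'i \<Rightarrow> ('i,'h,'q::ab_group_add) rep"
    and \<iota> :: "'i \<Rightarrow> 'i \<Rightarrow> complex \<Rightarrow> 'q" and a :: "'i \<Rightarrow> nat"
  assumes dg: "double_graph G" and hull: "\<And>i. is_injective_hull G (simple_mod i) (Q i) (\<iota> i)"
begin

abbreviation E where "E \<equiv> dsum_mod Q a"

lemma modQ: "is_module G (Q i)" using hull[of i] by (simp add: is_injective_hull_def)
lemma injQ: "is_injective G (Q i)" using hull[of i] by (simp add: is_injective_hull_def)
lemma monoI: "is_mono G (simple_mod i) (Q i) (\<iota> i)" using hull[of i] by (simp add: is_injective_hull_def)
lemma essQ: assumes "is_submodule G (Q i) U" "\<exists>k. U k \<noteq> {0}"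
  shows "\<exists>k. \<exists>v\<in>U k. v \<noteq> 0 \<and> v \<in> \<iota> i k ` rsp (simple_mod i :: ('i,'h,complex) rep) k"
proof -
  have "\<forall>U. is_submodule G (Q i) U \<longrightarrow> (\<exists>k. U k \<noteq> {0}) \<longrightarrow>
          (\<exists>k. \<exists>v\<in>U k. v \<noteq> 0 \<and> v \<in> \<iota> i k ` rsp (simple_mod i :: ('i,'h,complex) rep) k)"
    using hull[of i] unfolding is_injective_hull_def by (elim conjE) assumption
  from this[rule_format, OF assms] show ?thesis .
qed
lemma vQ: "vector_space (rsc (Q i))" using mod_vs[OF modQ] .
lemma mQ: "module (rsc (Q i))" using vQ by (simp add: module_iff_vector_space)
lemma finH: "finite (garr G)" using dg by (simp add: double_graph_def)

lemma E_rsc: "rsc E c \<phi> = (\<lambda>p. rsc (Q (fst p)) c (\<phi> p))"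
  by (simp add: dsum_mod_def rsc_def)
lemma E_rsp: "rsp E j = {\<phi>. \<forall>p. (snd p < a (fst p) \<longrightarrow> \<phi> p \<in> rsp (Q (fst p)) j) \<and>
                      (\<not> snd p < a (fst p) \<longrightarrow> \<phi> p = 0)}"
  by (simp add: dsum_mod_def rsp_def)
lemma E_rmap: "rmap E h \<phi> = (\<lambda>p. if snd p < a (fst p) then rmap (Q (fst p)) h (\<phi> p) else 0)"
  by (simp add: dsum_mod_def rmap_def)

lemma Q0: "0 \<in> rsp (Q i) k" using module.subspace_0[OF mQ mod_sub[OF modQ]] .
lemma Qsc0: "rsc (Q i) c 0 = 0" using module.scale_zero_right[OF mQ] .
lemma Qarr0: "h \<in> garr G \<Longrightarrow> rmap (Q i) h 0 = 0"
  using lin_on_zero[OF vQ mod_sub[OF modQ] mod_lin[OF modQ]] by blast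

lemma vsE: "vector_space (rsc E)"
  by unfold_locales (simp_all add: E_rsc fun_eq_iff module.scale_right_distrib[OF mQ]
      module.scale_left_distrib[OF mQ] module.scale_scale[OF mQ] module.scale_one[OF mQ])

lemma subE: "module.subspace (rsc E) (rsp E j)"
proof -
  interpret VE: vector_space "rsc E" by (rule vsE)
  show ?thesis
  proof (rule VE.subspaceI)
    show "0 \<in> rsp E j" by (simp add: E_rsp Q0)
    fix x y assume "x \<in> rsp E j" "y \<in> rsp E j"
    then show "x + y \<in> rsp E j"
      by (auto simp: E_rsp intro!: module.subspace_add[OF mQ mod_sub[OF modQ]])
  next
    fix c x assume "x \<in> rsp E j"
    then show "rsc E c x \<in> rsp E j"
      by (auto simp: E_rsp E_rsc Qsc0 intro!: module.subspace_scale[OF mQ mod_sub[OF modQ]])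
  qed
qed

lemma E_mem: "x \<in> rsp E j \<Longrightarrow> (snd p < a (fst p) \<longrightarrow> x p \<in> rsp (Q (fst p)) j) \<and>
                      (\<not> snd p < a (fst p) \<longrightarrow> x p = 0)"
proof -
  assume "x \<in> rsp E j"
  then have "\<forall>p. (snd p < a (fst p) \<longrightarrow> x p \<in> rsp (Q (fst p)) j) \<and>
                      (\<not> snd p < a (fst p) \<longrightarrow> x p = 0)" by (simp only: E_rsp mem_Collect_eq)
  then show ?thesis by (rule spec)
qed
lemma E_val: "x \<in> rsp E j \<Longrightarrow> snd p < a (fst p) \<Longrightarrow> x p \<in> rsp (Q (fst p)) j"
  using E_mem by blast
lemma E_inval: "x \<in> rsp E j \<Longrightarrow> \<not> snd p < a (fst p) \<Longrightarrow> x p = 0"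
  using E_mem by blast

lemma arrE: "h \<in> garr G \<Longrightarrow> rmap E h ` rsp E (gsrc G h) \<subseteq> rsp E (gtgt G h)"
  using mod_arr[OF modQ] by (fastforce simp: E_rsp E_rmap)

lemma linE: "h \<in> garr G \<Longrightarrow> lin_on (rsc E) (rsc E) (rsp E (gsrc G h)) (rmap E h)"
  unfolding lin_on_def
proof (intro conjI ballI allI)
  fix x y assume h: "h \<in> garr G" and xy: "x \<in> rsp E (gsrc G h)" "y \<in> rsp E (gsrc G h)"
  show "rmap E h (x + y) = rmap E h x + rmap E h y"
    unfolding E_rmap fun_eq_iff using mod_lin[OF modQ h] E_val[OF xy(1)] E_val[OF xy(2)]
    by (auto simp: lin_on_def)
next
  fix c x assume h: "h \<in> garr G" and x: "x \<in> rsp E (gsrc G h)"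
  show "rmap E h (rsc E c x) = rsc E c (rmap E h x)"
    unfolding E_rmap E_rsc fun_eq_iff using mod_lin[OF modQ h] E_val[OF x] Qsc0
    by (auto simp: lin_on_def)
qed

lemma relE: "v \<in> rsp E i \<Longrightarrow>
   (\<Sum>h\<in>{h\<in>garr G. gtgt G h = i}. rsc E (geps G h) (rmap E h (rmap E (gbar G h) v))) = 0"
proof -
  assume v: "v \<in> rsp E i"
  show ?thesis
  proof
    fix p
    show "(\<Sum>h\<in>{h\<in>garr G. gtgt G h = i}. rsc E (geps G h) (rmap E h (rmap E (gbar G h) v))) p = 0 p"
    proof (cases "snd p < a (fst p)")
      case True
      have "(\<Sum>h\<in>{h\<in>garr G. gtgt G h = i}. rsc E (geps G h) (rmap E h (rmap E (gbar G h) v))) p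
          = (\<Sum>h\<in>{h\<in>garr G. gtgt G h = i}. rsc (Q (fst p)) (geps G h) (rmap (Q (fst p)) h (rmap (Q (fst p)) (gbar G h) (v p))))"
        unfolding sum_app using True by (simp add: E_rsc E_rmap)
      also have "\<dots> = 0" using mod_rel[OF modQ E_val[OF v True]] .
      finally show ?thesis by simp
    next
      case False
      then show ?thesis unfolding sum_app by (simp add: E_rsc E_rmap Qsc0)
    qed
  qed
qed

lemma modE: "is_module G E"
  unfolding is_module_def using vsE subE arrE linE relE by blast

end

context hull_setup begin

lemma one_step:
  assumes D: "is_submodule G E D" and f: "is_hom G (rsc E, D, rmap E) E f" and v: "v \<in> rsp E j"
  shows "\<exists>D' f'. is_submodule G E D' \<and> is_hom G (rsc E, D', rmap E) E f' \<and> (\<forall>k. D k \<subseteq> D' k)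
     \<and> v \<in> D' j \<and> (\<forall>k. \<forall>x\<in>D k. f' k x = f k x)"
proof -
  interpret VE: vector_space "rsc E" by (rule vsE)
  obtain C where C: "is_submodule G E C" "v \<in> C j" "\<And>k. \<exists>R. countable R \<and> C k \<subseteq> VE.span R"
    using cyclic_countable[OF modE finH v] by blast
  define N where "N = (rsc E, C, rmap E)"
  have modN: "is_module G N" using sub_module[OF modE C(1)] by (simp add: N_def)
  have cntN: "\<And>k. \<exists>R. countable R \<and> rsp N k \<subseteq> module.span (rsc N) R" using C(3) by (simp add: N_def)
  define M where "M = (\<lambda>k. D k \<inter> C k)"
  have DE: "D k \<subseteq> rsp E k" for k using submod_le[OF D] .
  have CE: "C k \<subseteq> rsp E k" for k using submod_le[OF C(1)] .
  have subD: "VE.subspace (D k)" for k using submod_sub[OF D] .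
  have subC: "VE.subspace (C k)" for k using submod_sub[OF C(1)] .
  have subM: "is_submodule G N M"
    unfolding is_submodule_def N_def rep_simps M_def
  proof (intro conjI allI ballI)
    fix i show "VE.subspace (D i \<inter> C i)" using subD subC VE.subspace_inter by blast
    show "D i \<inter> C i \<subseteq> C i" by blast
  next
    fix h assume h: "h \<in> garr G"
    show "rmap E h ` (D (gsrc G h) \<inter> C (gsrc G h)) \<subseteq> D (gtgt G h) \<inter> C (gtgt G h)"
      using submod_arr[OF D h] submod_arr[OF C(1) h] by blast
  qed
  have flin: "lin_on (rsc E) (rsc E) (D k) (f k)" for k using hom_lin[OF f] by simp
  have fimg: "f k x \<in> rsp E k" if "x \<in> D k" for k x using hom_img[OF f, of k] that by auto
  have farr: "f (gtgt G h) (rmap E h x) = rmap E h (f (gsrc G h) x)" if "h \<in> garr G" "x \<in> D (gsrc G h)" for h x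
    using hom_arr[OF f that(1)] that(2) by simp
  have "\<forall>p. \<exists>\<chi>. is_hom G N (Q (fst p)) \<chi> \<and> (\<forall>k. \<forall>x\<in>M k. \<chi> k x = f k x p)"
  proof
    fix p
    have homp: "is_hom G (rsc N, M, rmap N) (Q (fst p)) (\<lambda>k x. f k x p)"
      unfolding is_hom_def N_def rep_simps
    proof (intro conjI allI ballI)
      fix i show "lin_on (rsc E) (rsc (Q (fst p))) (M i) (\<lambda>x. f i x p)"
        using flin[of i] unfolding lin_on_def M_def by (auto simp: E_rsc)
      show "(\<lambda>x. f i x p) ` M i \<subseteq> rsp (Q (fst p)) i"
        using fimg E_val E_inval Q0 unfolding M_def by (cases "snd p < a (fst p)") fastforce+
    next
      fix h x assume h: "h \<in> garr G" and x: "x \<in> M (gsrc G h)"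
      then have xD: "x \<in> D (gsrc G h)" by (simp add: M_def)
      show "f (gtgt G h) (rmap E h x) p = rmap (Q (fst p)) h (f (gsrc G h) x p)"
        using farr[OF h xD] E_inval[OF fimg[OF xD]] Qarr0[OF h] by (simp add: E_rmap)
    qed
    show "\<exists>\<chi>. is_hom G N (Q (fst p)) \<chi> \<and> (\<forall>k. \<forall>x\<in>M k. \<chi> k x = f k x p)"
      by (rule inj_ext[OF dg injQ modN cntN subM homp])
  qed
  then obtain \<chi>s where chis: "\<And>p. is_hom G N (Q (fst p)) (\<chi>s p)" "\<And>p k x. x \<in> M k \<Longrightarrow> \<chi>s p k x = f k x p"
    by metis
  define \<chi> where "\<chi> = (\<lambda>k x p. if snd p < a (fst p) then \<chi>s p k x else 0)"
  have chilin: "\<chi> k (x + y) = \<chi> k x + \<chi> k y" "\<chi> k (rsc E c x) = rsc E c (\<chi> k x)"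
    if "x \<in> C k" "y \<in> C k" for k x y c
    using hom_lin[OF chis(1)] that Qsc0 by (auto simp: \<chi>_def fun_eq_iff N_def lin_on_def E_rsc)
  have chi_lin: "lin_on (rsc E) (rsc E) (C k) (\<chi> k)" for k using chilin unfolding lin_on_def by blast
  have chiimg: "\<chi> k x \<in> rsp E k" if "x \<in> C k" for k x
  proof -
    have "\<chi>s p k x \<in> rsp (Q (fst p)) k" for p using hom_img[OF chis(1), of p k] that by (auto simp: N_def)
    then show ?thesis unfolding E_rsp mem_Collect_eq \<chi>_def by simp
  qed
  have chiarr: "\<chi> (gtgt G h) (rmap E h x) = rmap E h (\<chi> (gsrc G h) x)" if "h \<in> garr G" "x \<in> C (gsrc G h)" for h x
    using hom_arr[OF chis(1) that(1)] that(2) by (auto simp: \<chi>_def E_rmap N_def fun_eq_iff)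
  have chiM: "\<chi> k x = f k x" if "x \<in> M k" for k x
  proof
    fix p
    have xD: "x \<in> D k" using that by (simp add: M_def)
    show "\<chi> k x p = f k x p" using chis(2)[OF that] E_inval[OF fimg[OF xD]] by (simp add: \<chi>_def)
  qed
  have wd: "f k d + \<chi> k c = f k d' + \<chi> k c'"
    if "d \<in> D k" "c \<in> C k" "d' \<in> D k" "c' \<in> C k" "d + c = d' + c'" for k d c d' c'
  proof -
    have "d - d' = c' - c" using that(5) by (simp add: algebra_simps)
    moreover have "d - d' \<in> D k" using that VE.subspace_diff[OF subD] by blast
    moreover have "c' - c \<in> C k" using that VE.subspace_diff[OF subC] by blast
    ultimately have "f k (d - d') = \<chi> k (c' - c)" using chiM[of "d - d'" k] by (simp add: M_def)
    moreover have "f k (d - d') = f k d - f k d'" using lin_on_diff[OF vsE subD flin] that by blast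
    moreover have "\<chi> k (c' - c) = \<chi> k c' - \<chi> k c"
      using lin_on_diff[OF vsE subC chi_lin] that by blast
    ultimately show ?thesis by (simp add: algebra_simps)
  qed
  define D' where "D' = (\<lambda>k. {d + c | d c. d \<in> D k \<and> c \<in> C k})"
  define f' where "f' = (\<lambda>k x. SOME y. \<exists>d c. d \<in> D k \<and> c \<in> C k \<and> x = d + c \<and> y = f k d + \<chi> k c)"
  have f'eq: "f' k (d + c) = f k d + \<chi> k c" if "d \<in> D k" "c \<in> C k" for k d c
  proof -
    have ex: "\<exists>y. \<exists>d' c'. d' \<in> D k \<and> c' \<in> C k \<and> d + c = d' + c' \<and> y = f k d' + \<chi> k c'" using that by blast
    have "\<exists>d' c'. d' \<in> D k \<and> c' \<in> C k \<and> d + c = d' + c' \<and> f' k (d + c) = f k d' + \<chi> k c'"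
      unfolding f'_def using someI_ex[OF ex] .
    then show ?thesis using wd that by metis
  qed
  have D'E: "D' k \<subseteq> rsp E k" for k
  proof
    fix x assume "x \<in> D' k"
    then obtain d c where "d \<in> D k" "c \<in> C k" "x = d + c" by (auto simp: D'_def)
    then show "x \<in> rsp E k" using DE CE VE.subspace_add[OF subE] by blast
  qed
  have subD': "is_submodule G E D'"
    unfolding is_submodule_def
  proof (intro conjI allI ballI)
    fix i show "VE.subspace (D' i)" unfolding D'_def by (rule VE.subspace_sums[OF subD subC])
    show "D' i \<subseteq> rsp E i" by (rule D'E)
  next
    fix h assume h: "h \<in> garr G"
    show "rmap E h ` D' (gsrc G h) \<subseteq> D' (gtgt G h)"
    proof
      fix y assume "y \<in> rmap E h ` D' (gsrc G h)"
      then obtain d c where dc: "d \<in> D (gsrc G h)" "c \<in> C (gsrc G h)" "y = rmap E h (d + c)"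
        by (auto simp: D'_def)
      have "y = rmap E h d + rmap E h c" using linE[OF h] dc DE CE unfolding lin_on_def by blast
      moreover have "rmap E h d \<in> D (gtgt G h)" "rmap E h c \<in> C (gtgt G h)"
        using submod_arr[OF D h] submod_arr[OF C(1) h] dc by auto
      ultimately show "y \<in> D' (gtgt G h)" by (auto simp: D'_def)
    qed
  qed
  have homf': "is_hom G (rsc E, D', rmap E) E f'"
    unfolding is_hom_def rep_simps
  proof (intro conjI allI ballI)
    fix i
    show "lin_on (rsc E) (rsc E) (D' i) (f' i)"
      unfolding lin_on_def
    proof (intro conjI allI ballI)
      fix x y assume "x \<in> D' i" "y \<in> D' i"
      then obtain d c d' c' where dc: "d \<in> D i" "c \<in> C i" "x = d + c" "d' \<in> D i" "c' \<in> C i" "y = d' + c'"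
        by (auto simp: D'_def)
      have "x + y = (d + d') + (c + c')" using dc by (simp add: algebra_simps)
      moreover have "d + d' \<in> D i" "c + c' \<in> C i" using dc VE.subspace_add[OF subD] VE.subspace_add[OF subC] by auto
      ultimately have "f' i (x + y) = f i (d + d') + \<chi> i (c + c')" using f'eq by simp
      also have "\<dots> = (f i d + \<chi> i c) + (f i d' + \<chi> i c')"
        using flin[of i] chilin dc unfolding lin_on_def by (simp add: algebra_simps)
      also have "\<dots> = f' i x + f' i y" using f'eq dc by simp
      finally show "f' i (x + y) = f' i x + f' i y" .
    next
      fix s x assume "x \<in> D' i"
      then obtain d c where dc: "d \<in> D i" "c \<in> C i" "x = d + c" by (auto simp: D'_def)
      have "rsc E s x = rsc E s d + rsc E s c" using dc VE.scale_right_distrib by simp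
      moreover have "rsc E s d \<in> D i" "rsc E s c \<in> C i" using dc VE.subspace_scale[OF subD] VE.subspace_scale[OF subC] by auto
      ultimately have "f' i (rsc E s x) = f i (rsc E s d) + \<chi> i (rsc E s c)" using f'eq by simp
      also have "\<dots> = rsc E s (f i d + \<chi> i c)"
        using flin[of i] chilin dc VE.scale_right_distrib unfolding lin_on_def by simp
      also have "\<dots> = rsc E s (f' i x)" using f'eq dc by simp
      finally show "f' i (rsc E s x) = rsc E s (f' i x)" .
    qed
    show "f' i ` D' i \<subseteq> rsp E i"
    proof
      fix y assume "y \<in> f' i ` D' i"
      then obtain d c where dc: "d \<in> D i" "c \<in> C i" "y = f' i (d + c)" by (auto simp: D'_def)
      then show "y \<in> rsp E i" using f'eq fimg chiimg VE.subspace_add[OF subE] by simp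
    qed
  next
    fix h x assume h: "h \<in> garr G" and x: "x \<in> D' (gsrc G h)"
    then obtain d c where dc: "d \<in> D (gsrc G h)" "c \<in> C (gsrc G h)" "x = d + c" by (auto simp: D'_def)
    have "rmap E h x = rmap E h d + rmap E h c" using linE[OF h] dc DE CE unfolding lin_on_def by blast
    moreover have "rmap E h d \<in> D (gtgt G h)" "rmap E h c \<in> C (gtgt G h)"
      using submod_arr[OF D h] submod_arr[OF C(1) h] dc by auto
    ultimately have "f' (gtgt G h) (rmap E h x) = f (gtgt G h) (rmap E h d) + \<chi> (gtgt G h) (rmap E h c)"
      using f'eq by simp
    also have "\<dots> = rmap E h (f (gsrc G h) d) + rmap E h (\<chi> (gsrc G h) c)"
      using farr[OF h dc(1)] chiarr[OF h dc(2)] by simp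
    also have "\<dots> = rmap E h (f (gsrc G h) d + \<chi> (gsrc G h) c)"
      using linE[OF h] fimg[OF dc(1)] chiimg[OF dc(2)] unfolding lin_on_def by simp
    also have "\<dots> = rmap E h (f' (gsrc G h) x)" using f'eq dc by simp
    finally show "f' (gtgt G h) (rmap E h x) = rmap E h (f' (gsrc G h) x)" .
  qed
  have c0: "0 \<in> C k" "0 \<in> D k" for k using VE.subspace_0[OF subC] VE.subspace_0[OF subD] by auto
  have chi0: "\<chi> k 0 = 0" for k using lin_on_zero[OF vsE subC chi_lin] .
  have "D k \<subseteq> D' k" for k
  proof
    fix x assume "x \<in> D k"
    then have "x = x + 0 \<and> x \<in> D k \<and> 0 \<in> C k" using c0 by simp
    then show "x \<in> D' k" unfolding D'_def by blast
  qed
  moreover have "v \<in> D' j"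
  proof -
    have "v = 0 + v \<and> 0 \<in> D j \<and> v \<in> C j" using c0 C(2) by simp
    then show ?thesis unfolding D'_def by blast
  qed
  moreover have "f' k x = f k x" if "x \<in> D k" for k x using f'eq[OF that c0(1)] chi0 by simp
  ultimately show ?thesis using subD' homf' by blast
qed

end

context hull_setup begin

definition adm :: "('i \<Rightarrow> ('i \<times> nat \<Rightarrow> 'q) set) \<Rightarrow> ('i \<Rightarrow> ('i \<times> nat \<Rightarrow> 'q) \<Rightarrow> ('i \<times> nat \<Rightarrow> 'q))
    \<Rightarrow> ('i \<times> ('i \<times> nat \<Rightarrow> 'q) \<times> ('i \<times> nat \<Rightarrow> 'q)) set \<Rightarrow> bool" where
  "adm U0 \<phi>0 \<Gamma> \<longleftrightarrow>
    (\<forall>k x y. (k,x,y) \<in> \<Gamma> \<longrightarrow> x \<in> rsp E k \<and> y \<in> rsp E k) \<and>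
    (\<forall>k x y y'. (k,x,y) \<in> \<Gamma> \<longrightarrow> (k,x,y') \<in> \<Gamma> \<longrightarrow> y = y') \<and>
    (\<forall>k x y x' y'. (k,x,y) \<in> \<Gamma> \<longrightarrow> (k,x',y') \<in> \<Gamma> \<longrightarrow> (k, x+x', y+y') \<in> \<Gamma>) \<and>
    (\<forall>k c x y. (k,x,y) \<in> \<Gamma> \<longrightarrow> (k, rsc E c x, rsc E c y) \<in> \<Gamma>) \<and>
    (\<forall>h x y. h \<in> garr G \<longrightarrow> (gsrc G h, x, y) \<in> \<Gamma> \<longrightarrow> (gtgt G h, rmap E h x, rmap E h y) \<in> \<Gamma>) \<and>
    (\<forall>k x. x \<in> U0 k \<longrightarrow> (k, x, \<phi>0 k x) \<in> \<Gamma>)"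

definition graph_of :: "('i \<Rightarrow> 'a set) \<Rightarrow> ('i \<Rightarrow> 'a \<Rightarrow> 'b) \<Rightarrow> ('i \<times> 'a \<times> 'b) set" where
  "graph_of D f = {(k, x, f k x) | k x. x \<in> D k}"

lemma admD:
  assumes "adm U0 \<phi>0 \<Gamma>"
  shows "\<And>k x y. (k,x,y) \<in> \<Gamma> \<Longrightarrow> x \<in> rsp E k \<and> y \<in> rsp E k"
    "\<And>k x y y'. (k,x,y) \<in> \<Gamma> \<Longrightarrow> (k,x,y') \<in> \<Gamma> \<Longrightarrow> y = y'"
    "\<And>k x y x' y'. (k,x,y) \<in> \<Gamma> \<Longrightarrow> (k,x',y') \<in> \<Gamma> \<Longrightarrow> (k, x+x', y+y') \<in> \<Gamma>"
    "\<And>k c x y. (k,x,y) \<in> \<Gamma> \<Longrightarrow> (k, rsc E c x, rsc E c y) \<in> \<Gamma>"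
    "\<And>h x y. h \<in> garr G \<Longrightarrow> (gsrc G h, x, y) \<in> \<Gamma> \<Longrightarrow> (gtgt G h, rmap E h x, rmap E h y) \<in> \<Gamma>"
    "\<And>k x. x \<in> U0 k \<Longrightarrow> (k, x, \<phi>0 k x) \<in> \<Gamma>"
proof -
  note A = assms[unfolded adm_def]
  show "\<And>k x y. (k,x,y) \<in> \<Gamma> \<Longrightarrow> x \<in> rsp E k \<and> y \<in> rsp E k"
    using conjunct1[OF A, rule_format] .
  show "\<And>k x y y'. (k,x,y) \<in> \<Gamma> \<Longrightarrow> (k,x,y') \<in> \<Gamma> \<Longrightarrow> y = y'"
    using conjunct1[OF conjunct2[OF A], rule_format] .
  show "\<And>k x y x' y'. (k,x,y) \<in> \<Gamma> \<Longrightarrow> (k,x',y') \<in> \<Gamma> \<Longrightarrow> (k, x+x', y+y') \<in> \<Gamma>"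
    using conjunct1[OF conjunct2[OF conjunct2[OF A]], rule_format] .
  show "\<And>k c x y. (k,x,y) \<in> \<Gamma> \<Longrightarrow> (k, rsc E c x, rsc E c y) \<in> \<Gamma>"
    using conjunct1[OF conjunct2[OF conjunct2[OF conjunct2[OF A]]], rule_format] .
  show "\<And>h x y. h \<in> garr G \<Longrightarrow> (gsrc G h, x, y) \<in> \<Gamma> \<Longrightarrow> (gtgt G h, rmap E h x, rmap E h y) \<in> \<Gamma>"
    using conjunct1[OF conjunct2[OF conjunct2[OF conjunct2[OF conjunct2[OF A]]]], rule_format] .
  show "\<And>k x. x \<in> U0 k \<Longrightarrow> (k, x, \<phi>0 k x) \<in> \<Gamma>"
    using conjunct2[OF conjunct2[OF conjunct2[OF conjunct2[OF conjunct2[OF A]]]], rule_format] .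
qed

lemma graph_adm:
  assumes D: "is_submodule G E D" and f: "is_hom G (rsc E, D, rmap E) E f"
    and U: "\<And>k. U0 k \<subseteq> D k" and agree: "\<And>k x. x \<in> U0 k \<Longrightarrow> f k x = \<phi>0 k x"
  shows "adm U0 \<phi>0 (graph_of D f)"
proof -
  interpret VE: vector_space "rsc E" by (rule vsE)
  have DE: "D k \<subseteq> rsp E k" for k using submod_le[OF D] .
  have subD: "VE.subspace (D k)" for k using submod_sub[OF D] .
  have flin: "lin_on (rsc E) (rsc E) (D k) (f k)" for k using hom_lin[OF f] by simp
  have fimg: "f k x \<in> rsp E k" if "x \<in> D k" for k x using hom_img[OF f, of k] that by auto
  have farr: "f (gtgt G h) (rmap E h x) = rmap E h (f (gsrc G h) x)" if "h \<in> garr G" "x \<in> D (gsrc G h)" for h x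
    using hom_arr[OF f that(1)] that(2) by simp
  have mem: "(k, x, y) \<in> graph_of D f \<longleftrightarrow> x \<in> D k \<and> y = f k x" for k x y
    by (auto simp: graph_of_def)
  show ?thesis unfolding adm_def mem
    apply (intro conjI)
    subgoal using DE fimg by blast
    subgoal by simp
    subgoal using VE.subspace_add[OF subD] flin unfolding lin_on_def by auto
    subgoal using VE.subspace_scale[OF subD] flin unfolding lin_on_def by auto
    subgoal using submod_arr[OF D] farr by auto
    subgoal using U agree by auto
    done
qed

lemma adm_dom:
  assumes adm: "adm U0 \<phi>0 \<Gamma>" and U0: "is_submodule G E U0"
  shows "is_submodule G E (\<lambda>k. {x. \<exists>y. (k,x,y) \<in> \<Gamma>})"
    "is_hom G (rsc E, (\<lambda>k. {x. \<exists>y. (k,x,y) \<in> \<Gamma>}), rmap E) E (\<lambda>k x. THE y. (k,x,y) \<in> \<Gamma>)"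
    "\<And>k. U0 k \<subseteq> {x. \<exists>y. (k,x,y) \<in> \<Gamma>}"
    "\<And>k x. x \<in> U0 k \<Longrightarrow> (THE y. (k,x,y) \<in> \<Gamma>) = \<phi>0 k x"
    "\<Gamma> = graph_of (\<lambda>k. {x. \<exists>y. (k,x,y) \<in> \<Gamma>}) (\<lambda>k x. THE y. (k,x,y) \<in> \<Gamma>)"
proof -
  interpret VE: vector_space "rsc E" by (rule vsE)
  note inE = admD(1)[OF adm] and fnl = admD(2)[OF adm] and add = admD(3)[OF adm]
    and sc = admD(4)[OF adm] and arr = admD(5)[OF adm] and ext = admD(6)[OF adm]
  have the_eq: "(k,x,y) \<in> \<Gamma> \<Longrightarrow> (THE y. (k,x,y) \<in> \<Gamma>) = y" for k x y
    using fnl by (intro the_equality) auto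
  have the_in: "x \<in> {x. \<exists>y. (k,x,y) \<in> \<Gamma>} \<Longrightarrow> (k, x, THE y. (k,x,y) \<in> \<Gamma>) \<in> \<Gamma>" for k x
    using the_eq by auto
  have zero: "(k, 0, \<phi>0 k 0) \<in> \<Gamma>" for k
    using ext VE.subspace_0[OF submod_sub[OF U0]] by blast
  show "is_submodule G E (\<lambda>k. {x. \<exists>y. (k,x,y) \<in> \<Gamma>})"
    unfolding is_submodule_def
  proof (intro conjI allI ballI)
    fix i
    show "VE.subspace {x. \<exists>y. (i,x,y) \<in> \<Gamma>}"
    proof (rule VE.subspaceI)
      show "0 \<in> {x. \<exists>y. (i,x,y) \<in> \<Gamma>}" using zero by blast
    next
      fix x y assume "x \<in> {x. \<exists>y. (i,x,y) \<in> \<Gamma>}" "y \<in> {x. \<exists>y. (i,x,y) \<in> \<Gamma>}"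
      then obtain u w where "(i,x,u) \<in> \<Gamma>" "(i,y,w) \<in> \<Gamma>" by blast
      then have "(i, x+y, u+w) \<in> \<Gamma>" by (rule add)
      then show "x + y \<in> {x. \<exists>y. (i,x,y) \<in> \<Gamma>}" by blast
    next
      fix c x assume "x \<in> {x. \<exists>y. (i,x,y) \<in> \<Gamma>}"
      then obtain u where "(i,x,u) \<in> \<Gamma>" by blast
      then have "(i, rsc E c x, rsc E c u) \<in> \<Gamma>" by (rule sc)
      then show "rsc E c x \<in> {x. \<exists>y. (i,x,y) \<in> \<Gamma>}" by blast
    qed
    show "{x. \<exists>y. (i,x,y) \<in> \<Gamma>} \<subseteq> rsp E i" using inE by blast
  next
    fix h assume h: "h \<in> garr G"
    show "rmap E h ` {x. \<exists>y. (gsrc G h,x,y) \<in> \<Gamma>} \<subseteq> {x. \<exists>y. (gtgt G h,x,y) \<in> \<Gamma>}"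
    proof
      fix z assume "z \<in> rmap E h ` {x. \<exists>y. (gsrc G h,x,y) \<in> \<Gamma>}"
      then obtain x u where "(gsrc G h,x,u) \<in> \<Gamma>" "z = rmap E h x" by blast
      then show "z \<in> {x. \<exists>y. (gtgt G h,x,y) \<in> \<Gamma>}" using arr[OF h] by blast
    qed
  qed
  show "is_hom G (rsc E, (\<lambda>k. {x. \<exists>y. (k,x,y) \<in> \<Gamma>}), rmap E) E (\<lambda>k x. THE y. (k,x,y) \<in> \<Gamma>)"
    unfolding is_hom_def rep_simps
  proof (intro conjI allI ballI)
    fix i
    show "lin_on (rsc E) (rsc E) {x. \<exists>y. (i,x,y) \<in> \<Gamma>} (\<lambda>x. THE y. (i,x,y) \<in> \<Gamma>)"
      unfolding lin_on_def
    proof (intro conjI allI ballI)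
      fix x x' assume "x \<in> {x. \<exists>y. (i,x,y) \<in> \<Gamma>}" "x' \<in> {x. \<exists>y. (i,x,y) \<in> \<Gamma>}"
      then show "(THE y. (i,x+x',y) \<in> \<Gamma>) = (THE y. (i,x,y) \<in> \<Gamma>) + (THE y. (i,x',y) \<in> \<Gamma>)"
        by (rule the_eq[OF add[OF the_in the_in]])
    next
      fix c x assume "x \<in> {x. \<exists>y. (i,x,y) \<in> \<Gamma>}"
      then show "(THE y. (i,rsc E c x,y) \<in> \<Gamma>) = rsc E c (THE y. (i,x,y) \<in> \<Gamma>)"
        by (rule the_eq[OF sc[OF the_in]])
    qed
    show "(\<lambda>x. THE y. (i,x,y) \<in> \<Gamma>) ` {x. \<exists>y. (i,x,y) \<in> \<Gamma>} \<subseteq> rsp E i"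
      using the_in inE by blast
  next
    fix h x assume h: "h \<in> garr G" and x: "x \<in> {x. \<exists>y. (gsrc G h,x,y) \<in> \<Gamma>}"
    show "(THE y. (gtgt G h, rmap E h x, y) \<in> \<Gamma>) = rmap E h (THE y. (gsrc G h, x, y) \<in> \<Gamma>)"
      by (rule the_eq[OF arr[OF h the_in[OF x]]])
  qed
  show "U0 k \<subseteq> {x. \<exists>y. (k,x,y) \<in> \<Gamma>}" for k using ext by blast
  show "x \<in> U0 k \<Longrightarrow> (THE y. (k,x,y) \<in> \<Gamma>) = \<phi>0 k x" for k x by (rule the_eq[OF ext])
  show "\<Gamma> = graph_of (\<lambda>k. {x. \<exists>y. (k,x,y) \<in> \<Gamma>}) (\<lambda>k x. THE y. (k,x,y) \<in> \<Gamma>)"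
  proof
    show "\<Gamma> \<subseteq> graph_of (\<lambda>k. {x. \<exists>y. (k,x,y) \<in> \<Gamma>}) (\<lambda>k x. THE y. (k,x,y) \<in> \<Gamma>)"
    proof
      fix t assume t: "t \<in> \<Gamma>"
      obtain k x y where kxy: "t = (k,x,y)" by (cases t) auto
      have "(THE y. (k,x,y) \<in> \<Gamma>) = y" using the_eq t kxy by simp
      then show "t \<in> graph_of (\<lambda>k. {x. \<exists>y. (k,x,y) \<in> \<Gamma>}) (\<lambda>k x. THE y. (k,x,y) \<in> \<Gamma>)"
        unfolding graph_of_def using t kxy by auto
    qed
    show "graph_of (\<lambda>k. {x. \<exists>y. (k,x,y) \<in> \<Gamma>}) (\<lambda>k x. THE y. (k,x,y) \<in> \<Gamma>) \<subseteq> \<Gamma>"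
      unfolding graph_of_def using the_in by auto
  qed
qed

lemma chain_adm:
  assumes ne: "\<C> \<noteq> {}" and ch: "subset.chain {\<Gamma>. adm U0 \<phi>0 \<Gamma>} \<C>"
  shows "adm U0 \<phi>0 (\<Union>\<C>)"
proof -
  have mem: "\<And>\<Gamma>. \<Gamma> \<in> \<C> \<Longrightarrow> adm U0 \<phi>0 \<Gamma>" using ch by (auto simp: subset_chain_def)
  have cmp: "\<And>X Y. X \<in> \<C> \<Longrightarrow> Y \<in> \<C> \<Longrightarrow> X \<subseteq> Y \<or> Y \<subseteq> X" using ch by (auto simp: subset_chain_def)
  have two: "\<exists>\<Gamma>\<in>\<C>. t1 \<in> \<Gamma> \<and> t2 \<in> \<Gamma>" if t: "t1 \<in> \<Union>\<C>" "t2 \<in> \<Union>\<C>" for t1 t2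
  proof -
    obtain X Y where "X \<in> \<C>" "Y \<in> \<C>" "t1 \<in> X" "t2 \<in> Y" using t by blast
    then show ?thesis using cmp[of X Y] by blast
  qed
  obtain \<Gamma>0 where g0: "\<Gamma>0 \<in> \<C>" using ne by blast
  show ?thesis unfolding adm_def
  proof (intro conjI allI impI)
    fix k x y assume "(k,x,y) \<in> \<Union>\<C>"
    then obtain \<Gamma> where "\<Gamma> \<in> \<C>" "(k,x,y) \<in> \<Gamma>" by blast
    then show "x \<in> rsp E k" using admD(1)[OF mem[of \<Gamma>]] by blast
  next
    fix k x y assume "(k,x,y) \<in> \<Union>\<C>"
    then obtain \<Gamma> where "\<Gamma> \<in> \<C>" "(k,x,y) \<in> \<Gamma>" by blast
    then show "y \<in> rsp E k" using admD(1)[OF mem[of \<Gamma>]] by blast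
  next
    fix k x y y' assume "(k,x,y) \<in> \<Union>\<C>" "(k,x,y') \<in> \<Union>\<C>"
    then obtain \<Gamma> where "\<Gamma> \<in> \<C>" "(k,x,y) \<in> \<Gamma>" "(k,x,y') \<in> \<Gamma>" using two by blast
    then show "y = y'" using admD(2)[OF mem[of \<Gamma>]] by blast
  next
    fix k x y x' y' assume "(k,x,y) \<in> \<Union>\<C>" "(k,x',y') \<in> \<Union>\<C>"
    then obtain \<Gamma> where "\<Gamma> \<in> \<C>" "(k,x,y) \<in> \<Gamma>" "(k,x',y') \<in> \<Gamma>" using two by blast
    then have "(k, x+x', y+y') \<in> \<Gamma>" using admD(3)[OF mem[of \<Gamma>]] by blast
    then show "(k, x+x', y+y') \<in> \<Union>\<C>" using \<open>\<Gamma> \<in> \<C>\<close> by blast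
  next
    fix k c x y assume "(k,x,y) \<in> \<Union>\<C>"
    then obtain \<Gamma> where "\<Gamma> \<in> \<C>" "(k,x,y) \<in> \<Gamma>" by blast
    then have "(k, rsc E c x, rsc E c y) \<in> \<Gamma>" using admD(4)[OF mem[of \<Gamma>]] by blast
    then show "(k, rsc E c x, rsc E c y) \<in> \<Union>\<C>" using \<open>\<Gamma> \<in> \<C>\<close> by blast
  next
    fix h x y assume h: "h \<in> garr G" and "(gsrc G h, x, y) \<in> \<Union>\<C>"
    then obtain \<Gamma> where "\<Gamma> \<in> \<C>" "(gsrc G h, x, y) \<in> \<Gamma>" by blast
    then have "(gtgt G h, rmap E h x, rmap E h y) \<in> \<Gamma>" using h admD(5)[OF mem[of \<Gamma>]] by blast
    then show "(gtgt G h, rmap E h x, rmap E h y) \<in> \<Union>\<C>" using \<open>\<Gamma> \<in> \<C>\<close> by blast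
  next
    fix k x assume "x \<in> U0 k"
    then have "(k, x, \<phi>0 k x) \<in> \<Gamma>0" using admD(6)[OF mem[OF g0]] by blast
    then show "(k, x, \<phi>0 k x) \<in> \<Union>\<C>" using g0 by blast
  qed
qed

lemma E_collapse: "(rsc E, rsp E, rmap E) = E"
  by (simp add: rsc_def rsp_def rmap_def)

theorem ext_E:
  assumes U0: "is_submodule G E U0" and \<phi>0: "is_hom G (rsc E, U0, rmap E) E \<phi>0"
  shows "\<exists>\<psi>. is_hom G E E \<psi> \<and> (\<forall>k. \<forall>x\<in>U0 k. \<psi> k x = \<phi>0 k x)"
proof -
  have "\<exists>M\<in>{\<Gamma>. adm U0 \<phi>0 \<Gamma>}. \<forall>X\<in>{\<Gamma>. adm U0 \<phi>0 \<Gamma>}. M \<subseteq> X \<longrightarrow> X = M"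
  proof (rule subset_Zorn_nonempty)
    show "{\<Gamma>. adm U0 \<phi>0 \<Gamma>} \<noteq> {}" using graph_adm[OF U0 \<phi>0] by blast
    show "\<Union>\<C> \<in> {\<Gamma>. adm U0 \<phi>0 \<Gamma>}" if "\<C> \<noteq> {}" "subset.chain {\<Gamma>. adm U0 \<phi>0 \<Gamma>} \<C>" for \<C>
      using chain_adm[OF that] by simp
  qed
  then obtain M where M: "adm U0 \<phi>0 M" and max: "\<And>X. adm U0 \<phi>0 X \<Longrightarrow> M \<subseteq> X \<Longrightarrow> X = M" by blast
  define Dm where "Dm = (\<lambda>k. {x. \<exists>y. (k,x,y) \<in> M})"
  define fm where "fm = (\<lambda>k x. THE y. (k,x,y) \<in> M)"
  note dm = adm_dom[OF M U0, folded Dm_def fm_def]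
  have dm3: "U0 k \<subseteq> Dm k" for k using dm(3) by (simp add: Dm_def)
  have dm4: "fm k x = \<phi>0 k x" if "x \<in> U0 k" for k x using dm(4)[OF that] by (simp add: fm_def)
  have full: "Dm k = rsp E k" for k
  proof (rule ccontr)
    assume "Dm k \<noteq> rsp E k"
    then obtain v where v: "v \<in> rsp E k" "v \<notin> Dm k" using submod_le[OF dm(1)] by blast
    obtain D' f' where D': "is_submodule G E D'" "is_hom G (rsc E, D', rmap E) E f'" "\<And>k. Dm k \<subseteq> D' k"
      "v \<in> D' k" "\<And>k x. x \<in> Dm k \<Longrightarrow> f' k x = fm k x"
      using one_step[OF dm(1) dm(2) v(1)] by blast
    have U0D': "U0 k \<subseteq> D' k" for k using dm3 D'(3) by blast
    have agr: "f' k x = \<phi>0 k x" if "x \<in> U0 k" for k x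
    proof -
      have "x \<in> Dm k" using dm3 that by blast
      then show ?thesis using D'(5) dm4[OF that] by simp
    qed
    have adm': "adm U0 \<phi>0 (graph_of D' f')"
      by (rule graph_adm[OF D'(1) D'(2) U0D' agr])
    have "M \<subseteq> graph_of D' f'"
    proof
      fix t assume "t \<in> M"
      then have "t \<in> graph_of Dm fm" using dm(5) by simp
      then show "t \<in> graph_of D' f'" using D'(3) D'(5) unfolding graph_of_def by force
    qed
    then have "graph_of D' f' = M" using max adm' by blast
    moreover have "(k, v, f' k v) \<in> graph_of D' f'" using D'(4) unfolding graph_of_def by blast
    ultimately have "v \<in> Dm k" unfolding Dm_def by blast
    then show False using v(2) by blast
  qed
  have "Dm = rsp E" using full by blast
  then have "is_hom G E E fm" using dm(2) E_collapse by simp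
  then show ?thesis using dm4 by blast
qed

end

lemma simple_simps: "rsc (simple_mod i) = (*)" "rsp (simple_mod i) k = (if k = i then UNIV else {0})"
  "rmap (simple_mod i) h v = 0"
  by (simp_all add: simple_mod_def rsc_def rsp_def rmap_def)

context hull_setup begin

definition killed :: "'i \<Rightarrow> ('i \<times> nat \<Rightarrow> 'q) \<Rightarrow> bool" where
  "killed k x \<longleftrightarrow> (\<forall>h\<in>garr G. gsrc G h = k \<longrightarrow> rmap E h x = 0)"

lemma iota_hom: "is_hom G (simple_mod i :: ('i,'h,complex) rep) (Q i) (\<iota> i)"
  using monoI[of i] by (simp add: is_mono_def)

lemma iota_lin: "\<iota> i k (c * z) = rsc (Q i) c (\<iota> i k z)" if "z \<in> rsp (simple_mod i :: ('i,'h,complex) rep) k"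
  using hom_lin[OF iota_hom, of i k] that unfolding lin_on_def simple_simps by blast

lemma iota0: "\<iota> i k 0 = 0"
proof -
  have z: "(0::complex) \<in> rsp (simple_mod i :: ('i,'h,complex) rep) k" by (simp add: simple_simps)
  have "\<iota> i k (0 + 0) = \<iota> i k 0 + \<iota> i k 0"
    using hom_lin[OF iota_hom, of i k] z unfolding lin_on_def by blast
  then show ?thesis by simp
qed

lemma iota_killed:
  assumes h: "h \<in> garr G" and z: "z \<in> rsp (simple_mod i :: ('i,'h,complex) rep) (gsrc G h)"
  shows "rmap (Q i) h (\<iota> i (gsrc G h) z) = 0"
proof -
  have "\<iota> i (gtgt G h) (rmap (simple_mod i :: ('i,'h,complex) rep) h z) = rmap (Q i) h (\<iota> i (gsrc G h) z)"
    using hom_arr[OF iota_hom h z] .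
  then show ?thesis by (simp add: simple_simps iota0)
qed

lemma ess_aux:
  assumes "finite P"
  shows "\<forall>W. is_submodule G E W \<longrightarrow> (\<forall>k. \<forall>x\<in>W k. \<forall>p. p \<notin> P \<longrightarrow> x p = 0) \<longrightarrow> (\<exists>i. W i \<noteq> {0})
     \<longrightarrow> (\<exists>i x. x \<in> W i \<and> x \<noteq> 0 \<and> killed i x)"
  using assms
proof (induction P rule: finite_induct)
  case empty
  show ?case
  proof (intro allI impI)
    fix W assume W: "is_submodule G E W" and sup: "\<forall>k. \<forall>x\<in>W k. \<forall>p. p \<notin> {} \<longrightarrow> x p = 0"
      and ne: "\<exists>i. W i \<noteq> {0}"
    have "W k = {0}" for k
    proof -
      have "x = 0" if "x \<in> W k" for x using sup that by (auto simp: fun_eq_iff)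
      moreover have "0 \<in> W k" using module.subspace_0[OF _ submod_sub[OF W]] vsE
        by (simp add: module_iff_vector_space)
      ultimately show ?thesis by blast
    qed
    then show "\<exists>i x. x \<in> W i \<and> x \<noteq> 0 \<and> killed i x" using ne by blast
  qed
next
  case (insert p P)
  show ?case
  proof (intro allI impI)
    fix W assume W: "is_submodule G E W" and sup: "\<forall>k. \<forall>x\<in>W k. \<forall>q. q \<notin> insert p P \<longrightarrow> x q = 0"
      and ne: "\<exists>i. W i \<noteq> {0}"
    interpret VE: vector_space "rsc E" by (rule vsE)
    have subW: "VE.subspace (W k)" for k using submod_sub[OF W] .
    have WE: "W k \<subseteq> rsp E k" for k using submod_le[OF W] .
    define Wp where "Wp = (\<lambda>k. {x \<in> W k. x p = 0})"
    have subWp: "is_submodule G E Wp"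
      unfolding is_submodule_def
    proof (intro conjI allI ballI)
      fix i show "VE.subspace (Wp i)"
      proof (rule VE.subspaceI)
        show "0 \<in> Wp i" using VE.subspace_0[OF subW] by (simp add: Wp_def)
        fix x y assume "x \<in> Wp i" "y \<in> Wp i"
        then show "x + y \<in> Wp i" using VE.subspace_add[OF subW] by (simp add: Wp_def)
      next
        fix c x assume "x \<in> Wp i"
        then show "rsc E c x \<in> Wp i" using VE.subspace_scale[OF subW] by (simp add: Wp_def E_rsc Qsc0)
      qed
      show "Wp i \<subseteq> rsp E i" using WE by (auto simp: Wp_def)
    next
      fix h assume h: "h \<in> garr G"
      show "rmap E h ` Wp (gsrc G h) \<subseteq> Wp (gtgt G h)"
        using submod_arr[OF W h] Qarr0[OF h] by (auto simp: Wp_def E_rmap)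
    qed
    have supp: "\<forall>k. \<forall>x\<in>Wp k. \<forall>q. q \<notin> P \<longrightarrow> x q = 0"
    proof (intro allI ballI impI)
      fix k x q assume x: "x \<in> Wp k" and q: "q \<notin> P"
      show "x q = 0"
      proof (cases "q = p")
        case True then show ?thesis using x by (simp add: Wp_def)
      next
        case False
        then have "q \<notin> insert p P" using q by simp
        moreover have "x \<in> W k" using x by (simp add: Wp_def)
        ultimately show ?thesis using sup by blast
      qed
    qed
    show "\<exists>i x. x \<in> W i \<and> x \<noteq> 0 \<and> killed i x"
    proof (cases "\<exists>i. Wp i \<noteq> {0}")
      case True
      then obtain i x where "x \<in> Wp i" "x \<noteq> 0" "killed i x" using insert.IH subWp supp by blast
      then show ?thesis by (auto simp: Wp_def)
    next
      case False
      then have Wp0: "Wp k = {0}" for k by blast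
      obtain i0 where i0: "W i0 \<noteq> {0}" using ne by blast
      have "0 \<in> W i0" using VE.subspace_0[OF subW] .
      then obtain x0 where x0: "x0 \<in> W i0" "x0 \<noteq> 0" using i0 by blast
      have x0p: "x0 p \<noteq> 0" using x0 Wp0[of i0] by (auto simp: Wp_def)
      have valid: "snd p < a (fst p)" using x0p E_inval[OF subsetD[OF WE x0(1)]] by blast
      define V where "V = (\<lambda>k. (\<lambda>x. x p) ` W k)"
      have mQp: "module (rsc (Q (fst p)))" by (rule mQ)
      have subV: "is_submodule G (Q (fst p)) V"
        unfolding is_submodule_def
      proof (intro conjI allI ballI)
        fix i show "module.subspace (rsc (Q (fst p))) (V i)"
        proof (rule module.subspaceI[OF mQp])
          show "0 \<in> V i" unfolding V_def using VE.subspace_0[OF subW, of i] by (intro rev_image_eqI[of 0]) simp_all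
        next
          fix x y assume "x \<in> V i" "y \<in> V i"
          then obtain u w where "u \<in> W i" "w \<in> W i" "x = u p" "y = w p" by (auto simp: V_def)
          moreover have "u + w \<in> W i" using calculation VE.subspace_add[OF subW] by blast
          ultimately show "x + y \<in> V i" unfolding V_def by (intro rev_image_eqI[of "u + w"]) simp_all
        next
          fix c x assume "x \<in> V i"
          then obtain u where "u \<in> W i" "x = u p" by (auto simp: V_def)
          moreover have "rsc E c u \<in> W i" using calculation VE.subspace_scale[OF subW] by blast
          ultimately show "rsc (Q (fst p)) c x \<in> V i" unfolding V_def
            by (intro rev_image_eqI[of "rsc E c u"]) (simp_all add: E_rsc)
        qed
        show "V i \<subseteq> rsp (Q (fst p)) i"
        proof
          fix y assume "y \<in> V i"
          then obtain u where "u \<in> W i" "y = u p" by (auto simp: V_def)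
          then show "y \<in> rsp (Q (fst p)) i" using WE E_val[OF _ valid] by blast
        qed
      next
        fix h assume h: "h \<in> garr G"
        show "rmap (Q (fst p)) h ` V (gsrc G h) \<subseteq> V (gtgt G h)"
        proof
          fix y assume "y \<in> rmap (Q (fst p)) h ` V (gsrc G h)"
          then obtain u where u: "u \<in> W (gsrc G h)" "y = rmap (Q (fst p)) h (u p)" by (auto simp: V_def)
          have "rmap E h u \<in> W (gtgt G h)" using submod_arr[OF W h] u by blast
          moreover have "rmap E h u p = y" using u valid by (simp add: E_rmap)
          ultimately show "y \<in> V (gtgt G h)" unfolding V_def by (intro rev_image_eqI[of "rmap E h u"]) simp_all
        qed
      qed
      have "V i0 \<noteq> {0}" using x0 x0p by (auto simp: V_def)
      then obtain i w where w: "w \<in> V i" "w \<noteq> 0" "w \<in> \<iota> (fst p) i ` rsp (simple_mod (fst p) :: ('i,'h,complex) rep) i"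
        using essQ[OF subV] by blast
      obtain u where u: "u \<in> W i" "u p = w" using w(1) by (auto simp: V_def)
      obtain z where z: "z \<in> rsp (simple_mod (fst p) :: ('i,'h,complex) rep) i" "w = \<iota> (fst p) i z" using w(3) by blast
      have "killed i u"
        unfolding killed_def
      proof (intro ballI impI)
        fix h assume h: "h \<in> garr G" and src: "gsrc G h = i"
        have uW: "u \<in> W (gsrc G h)" using u src by simp
        have "rmap E h u \<in> W (gtgt G h)" using submod_arr[OF W h] uW by blast
        moreover have "rmap E h u p = 0"
          using iota_killed[OF h, of z "fst p"] z src u valid by (simp add: E_rmap)
        ultimately show "rmap E h u = 0" using Wp0 by (auto simp: Wp_def)
      qed
      moreover have "u \<noteq> 0" using u w(2) by auto
      ultimately show ?thesis using u(1) by blast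
    qed
  qed
qed

lemma finite_valid: "finite {p :: 'i \<times> nat. snd p < a (fst p)}"
proof -
  have "{p :: 'i \<times> nat. snd p < a (fst p)} = (SIGMA i:UNIV. {..<a i})" by auto
  then show ?thesis by simp
qed

theorem ess_E:
  assumes W: "is_submodule G E W" and ne: "\<exists>i. W i \<noteq> {0}"
  shows "\<exists>i x. x \<in> W i \<and> x \<noteq> 0 \<and> killed i x"
proof -
  have "\<forall>k. \<forall>x\<in>W k. \<forall>p. p \<notin> {p. snd p < a (fst p)} \<longrightarrow> x p = 0"
    using submod_le[OF W] E_inval by blast
  then show ?thesis using ess_aux[OF finite_valid] W ne by blast
qed

end

lemma extend_iso:
  assumes vs: "vector_space s" and V: "module.subspace s V" and T: "finite T" "V \<subseteq> module.span s T"
    and A: "module.subspace s A" "A \<subseteq> V" and A': "module.subspace s A'" "A' \<subseteq> V"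
    and thl: "lin_on s s A \<theta>" and thb: "bij_betw \<theta> A A'"
  shows "\<exists>\<tau>. lin_on s s V \<tau> \<and> bij_betw \<tau> V V \<and> (\<forall>x\<in>A. \<tau> x = \<theta> x)"
proof -
  interpret vs: vector_space s by fact
  interpret P: vector_space_pair s s by (intro vector_space_pair.intro vs vs)
  obtain B where B: "B \<subseteq> A" "vs.independent B" "A \<subseteq> vs.span B"
    using vs.maximal_independent_subset[of A] by blast
  have spB: "vs.span B = A" by (rule vs.span_subspace[OF B(1) B(3) A(1)])
  have finB: "finite B" using vs.independent_span_bound[OF T(1) B(2)] B(1) A(2) T(2) by blast
  define g where "g = P.construct B \<theta>"
  have lg: "Vector_Spaces.linear s s g" unfolding g_def by (rule P.linear_construct[OF B(2)])
  have gadd: "g (x + y) = g x + g y" "g (s c x) = s c (g x)" for x y c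
    using lg Vector_Spaces.linear_iff by blast+
  have gA: "g x = \<theta> x" if "x \<in> A" for x
  proof -
    have sub: "vs.subspace {x. x \<in> A \<and> g x = \<theta> x}"
    proof (rule vs.subspaceI)
      show "0 \<in> {x. x \<in> A \<and> g x = \<theta> x}"
        using vs.subspace_0[OF A(1)] P.linear_0[OF lg] lin_on_zero[OF vs A(1) thl] by simp
    next
      fix x y assume "x \<in> {x. x \<in> A \<and> g x = \<theta> x}" "y \<in> {x. x \<in> A \<and> g x = \<theta> x}"
      then show "x + y \<in> {x. x \<in> A \<and> g x = \<theta> x}"
        using vs.subspace_add[OF A(1)] gadd thl unfolding lin_on_def by auto
    next
      fix c x assume "x \<in> {x. x \<in> A \<and> g x = \<theta> x}"
      then show "s c x \<in> {x. x \<in> A \<and> g x = \<theta> x}"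
        using vs.subspace_scale[OF A(1)] gadd thl unfolding lin_on_def by auto
    qed
    have "x \<in> vs.span B" using that spB by simp
    then show ?thesis
      using vs.span_induct[of x B "\<lambda>x. x \<in> A \<and> g x = \<theta> x"] sub B(1) P.construct_basis[OF B(2)]
      unfolding g_def by auto
  qed
  have injA: "inj_on \<theta> A" using thb by (simp add: bij_betw_def)
  have imA: "\<theta> ` A = A'" using thb by (simp add: bij_betw_def)
  have injg: "inj_on g (vs.span B)" using injA gA spB by (auto simp: inj_on_def)
  have indgB: "vs.independent (g ` B)" by (rule P.linear_independent_injective_image[OF lg B(2) injg])
  have gBA': "g ` B \<subseteq> A'" using gA B(1) imA by auto
  have spgB: "vs.span (g ` B) = A'"
  proof -
    have "vs.span (g ` B) = g ` vs.span B" by (rule P.linear_span_image[OF lg])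
    also have "\<dots> = \<theta> ` A" using spB gA by (auto simp: image_def)
    finally show ?thesis using imA by simp
  qed
  obtain B1 where B1: "B \<subseteq> B1" "B1 \<subseteq> V" "vs.independent B1" "V \<subseteq> vs.span B1"
    using vs.maximal_independent_subset_extend[of B V] B(1) A(2) B(2) by blast
  obtain B2 where B2: "g ` B \<subseteq> B2" "B2 \<subseteq> V" "vs.independent B2" "V \<subseteq> vs.span B2"
    using vs.maximal_independent_subset_extend[of "g ` B" V] gBA' A'(2) indgB by blast
  have fin1: "finite B1" using vs.independent_span_bound[OF T(1) B1(3)] B1(2) T(2) by blast
  have fin2: "finite B2" using vs.independent_span_bound[OF T(1) B2(3)] B2(2) T(2) by blast
  have "card B1 \<le> card B2" using vs.independent_span_bound[OF fin2 B1(3)] B1(2) B2(4) by blast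
  moreover have "card B2 \<le> card B1" using vs.independent_span_bound[OF fin1 B2(3)] B2(2) B1(4) by blast
  ultimately have cB: "card B1 = card B2" by simp
  have injgB: "inj_on g B" using injg vs.span_superset inj_on_subset by blast
  have "card (g ` B) = card B" using card_image[OF injgB] .
  then have "card (B1 - B) = card (B2 - g ` B)"
    using cB card_Diff_subset[OF finB B1(1)] card_Diff_subset[OF finite_imageI[OF finB] B2(1)] by simp
  then obtain \<beta> where \<beta>: "bij_betw \<beta> (B1 - B) (B2 - g ` B)"
    using finite_same_card_bij fin1 fin2 by blast
  define t where "t = (\<lambda>b. if b \<in> B then g b else \<beta> b)"
  define \<tau> where "\<tau> = P.construct B1 t"
  have lt: "Vector_Spaces.linear s s \<tau>" unfolding \<tau>_def by (rule P.linear_construct[OF B1(3)])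
  have tb: "\<tau> b = t b" if "b \<in> B1" for b unfolding \<tau>_def by (rule P.construct_basis[OF B1(3) that])
  have imB1: "\<tau> ` B1 = B2"
  proof
    show "\<tau> ` B1 \<subseteq> B2" using tb \<beta> B2(1) by (auto simp: t_def bij_betw_def)
    show "B2 \<subseteq> \<tau> ` B1"
    proof
      fix y assume y: "y \<in> B2"
      show "y \<in> \<tau> ` B1"
      proof (cases "y \<in> g ` B")
        case True
        then obtain b where "b \<in> B" "y = g b" by blast
        then show ?thesis using tb B1(1) by (force simp: t_def)
      next
        case False
        then have "y \<in> \<beta> ` (B1 - B)" using y \<beta> by (auto simp: bij_betw_def)
        then obtain b where "b \<in> B1 - B" "y = \<beta> b" by blast
        then show ?thesis using tb by (force simp: t_def)
      qed
    qed
  qed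
  have injB1: "inj_on \<tau> B1"
  proof (rule inj_onI)
    fix x y assume x: "x \<in> B1" and y: "y \<in> B1" and eq: "\<tau> x = \<tau> y"
    have bx: "x \<notin> B \<Longrightarrow> \<beta> x \<in> B2 - g ` B" using x \<beta> by (auto simp: bij_betw_def)
    have by': "y \<notin> B \<Longrightarrow> \<beta> y \<in> B2 - g ` B" using y \<beta> by (auto simp: bij_betw_def)
    show "x = y"
    proof (cases "x \<in> B"; cases "y \<in> B")
      assume "x \<in> B" "y \<in> B" then show ?thesis using eq tb x y injgB by (simp add: t_def inj_on_def)
    next
      assume "x \<in> B" "y \<notin> B" then show ?thesis using eq tb x y by' by (simp add: t_def) (metis imageI)
    next
      assume "x \<notin> B" "y \<in> B" then show ?thesis using eq tb x y bx by (auto simp: t_def)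
    next
      assume "x \<notin> B" "y \<notin> B" then show ?thesis using eq tb x y \<beta> by (auto simp: t_def bij_betw_def inj_on_def)
    qed
  qed
  have indB2: "vs.independent (\<tau> ` B1)" using imB1 B2(3) by simp
  have spV: "vs.span B1 = V" by (rule vs.span_subspace[OF B1(2) B1(4) V])
  have spV2: "vs.span B2 = V" by (rule vs.span_subspace[OF B2(2) B2(4) V])
  have injV: "inj_on \<tau> V" using P.linear_inj_on_span_iff_independent_image[OF lt indB2] injB1 spV by simp
  have imV: "\<tau> ` V = V"
  proof -
    have "\<tau> ` V = \<tau> ` vs.span B1" using spV by simp
    also have "\<dots> = vs.span (\<tau> ` B1)" by (rule P.linear_span_image[OF lt, symmetric])
    finally show ?thesis using imB1 spV2 by simp
  qed
  have tA: "\<tau> x = \<theta> x" if "x \<in> A" for x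
  proof -
    have "\<tau> x = g x"
      by (rule P.linear_eq_on[OF lt lg, of x B]) (use that spB tb B1(1) in \<open>auto simp: t_def\<close>)
    then show ?thesis using gA that by simp
  qed
  have "lin_on s s V \<tau>" by (rule linear_lin_on[OF lt])
  moreover have "bij_betw \<tau> V V" using injV imV by (simp add: bij_betw_def)
  ultimately show ?thesis using tA by blast
qed

context hull_setup begin

lemma killedQ:
  assumes x: "x \<in> rsp (Q i) k" and kil: "\<forall>h\<in>garr G. gsrc G h = k \<longrightarrow> rmap (Q i) h x = 0"
  shows "x = 0 \<or> (k = i \<and> (\<exists>c. x = \<iota> i i c))"
proof (cases "x = 0")
  case True then show ?thesis by simp
next
  case False
  interpret VQ: vector_space "rsc (Q i)" by (rule vQ)
  define U where "U = (\<lambda>j. if j = k then range (\<lambda>c. rsc (Q i) c x) else {0})"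
  have rng: "range (\<lambda>c. rsc (Q i) c x) = VQ.span {x}" by (simp add: VQ.span_singleton)
  have subQ: "VQ.subspace (rsp (Q i) j)" for j using mod_sub[OF modQ] .
  have subU: "is_submodule G (Q i) U"
    unfolding is_submodule_def
  proof (intro conjI allI ballI)
    fix j show "VQ.subspace (U j)" unfolding U_def rng by simp
    show "U j \<subseteq> rsp (Q i) j" unfolding U_def using VQ.subspace_scale[OF subQ x] VQ.subspace_0[OF subQ] by auto
  next
    fix h assume h: "h \<in> garr G"
    have z: "0 \<in> U j" for j unfolding U_def by (auto intro: range_eqI[of _ _ 0])
    show "rmap (Q i) h ` U (gsrc G h) \<subseteq> U (gtgt G h)"
    proof
      fix y assume "y \<in> rmap (Q i) h ` U (gsrc G h)"
      then obtain u where u: "u \<in> U (gsrc G h)" "y = rmap (Q i) h u" by blast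
      show "y \<in> U (gtgt G h)"
      proof (cases "gsrc G h = k")
        case True
        then obtain c where "u = rsc (Q i) c x" using u by (auto simp: U_def)
        then have "y = rsc (Q i) c (rmap (Q i) h x)" using u mod_lin[OF modQ h] x True unfolding lin_on_def by auto
        then have "y = 0" using kil h True by simp
        then show ?thesis using z by simp
      next
        case False
        then have "u = 0" using u by (simp add: U_def)
        then show ?thesis using u Qarr0[OF h] z by simp
      qed
    qed
  qed
  have "x \<in> U k" unfolding U_def by (auto intro: range_eqI[of _ _ 1])
  then have "U k \<noteq> {0}" using False by blast
  then obtain j w where w: "w \<in> U j" "w \<noteq> 0" "w \<in> \<iota> i j ` rsp (simple_mod i :: ('i,'h,complex) rep) j"
    using essQ[OF subU] by blast
  have jk: "j = k" using w(1,2) by (auto simp: U_def split: if_splits)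
  obtain c where c: "w = rsc (Q i) c x" using w(1) jk by (auto simp: U_def)
  obtain z where z: "z \<in> rsp (simple_mod i :: ('i,'h,complex) rep) k" "w = \<iota> i k z" using w(3) jk by blast
  have ki: "k = i"
  proof (rule ccontr)
    assume "k \<noteq> i"
    then have "z = 0" using z(1) by (simp add: simple_simps)
    then show False using z(2) w(2) iota0 by simp
  qed
  have c0: "c \<noteq> 0" using c w(2) by auto
  have "x = rsc (Q i) (inverse c) w" using c c0 by simp
  also have "\<dots> = \<iota> i i (inverse c * z)" using z ki iota_lin[of z i i "inverse c"] by simp
  finally show ?thesis using ki by blast
qed

definition delta :: "'i \<Rightarrow> nat \<Rightarrow> 'i \<times> nat \<Rightarrow> 'q" where
  "delta k n = (\<lambda>p. if p = (k, n) then \<iota> k k 1 else 0)"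

lemma S_span:
  assumes x: "x \<in> rsp E k" and kil: "killed k x"
  shows "x \<in> module.span (rsc E) (delta k ` {..<a k})"
proof -
  interpret VE: vector_space "rsc E" by (rule vsE)
  have kp: "x p = 0 \<or> (k = fst p \<and> (\<exists>c. x p = \<iota> k k c))" if valid: "snd p < a (fst p)" for p
  proof -
    have "rmap (Q (fst p)) h (x p) = 0" if "h \<in> garr G" "gsrc G h = k" for h
    proof -
      have "rmap E h x = 0" using kil that unfolding killed_def by blast
      then have "rmap E h x p = 0" by simp
      then show ?thesis using valid by (simp add: E_rmap)
    qed
    then have "x p = 0 \<or> (k = fst p \<and> (\<exists>c. x p = \<iota> (fst p) (fst p) c))"
      using killedQ[OF E_val[OF x valid]] by blast
    then show ?thesis by auto
  qed
  have "\<forall>n. \<exists>c. x (k, n) = \<iota> k k c"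
  proof
    fix n show "\<exists>c. x (k, n) = \<iota> k k c"
    proof (cases "n < a k")
      case True
      then show ?thesis using kp[of "(k,n)"] iota0 by (auto intro: exI[of _ 0])
    next
      case False
      then show ?thesis using E_inval[OF x, of "(k,n)"] iota0 by (auto intro: exI[of _ 0])
    qed
  qed
  then obtain cf where cf: "\<And>n. x (k, n) = \<iota> k k (cf n)" by metis
  have i1: "rsc (Q k) c (\<iota> k k 1) = \<iota> k k c" for c
    using iota_lin[of 1 k k c] by (simp add: simple_simps)
  have eq: "x = (\<Sum>n\<in>{..<a k}. rsc E (cf n) (delta k n))"
  proof (rule ext)
    fix p :: "'i \<times> nat"
    obtain i m where p: "p = (i, m)" by (cases p) auto
    have "(\<Sum>n\<in>{..<a k}. rsc E (cf n) (delta k n)) p = (\<Sum>n\<in>{..<a k}. rsc (Q i) (cf n) (delta k n (i, m)))"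
      unfolding sum_app by (simp add: E_rsc p)
    also have "\<dots> = (\<Sum>n\<in>{..<a k}. if i = k \<and> n = m then \<iota> k k (cf n) else 0)"
      by (rule sum.cong[OF refl]) (auto simp: delta_def i1 Qsc0)
    also have "\<dots> = x p"
    proof (cases "i = k \<and> m < a k")
      case True
      then show ?thesis using cf p by (simp add: sum.delta)
    next
      case False
      have "(\<Sum>n\<in>{..<a k}. if i = k \<and> n = m then \<iota> k k (cf n) else 0) = 0"
        using False by (intro sum.neutral) auto
      moreover have "x p = 0"
      proof (cases "snd p < a (fst p)")
        case True
        then show ?thesis using kp[OF True] False p by auto
      next
        case False
        then show ?thesis using E_inval[OF x] by blast
      qed
      ultimately show ?thesis by simp
    qed
    finally show "x p = (\<Sum>n\<in>{..<a k}. rsc E (cf n) (delta k n)) p" by simp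
  qed
  show ?thesis
    unfolding eq by (intro VE.span_sum VE.span_scale VE.span_base) auto
qed

end

lemma hom_image_submod:
  assumes modM: "is_module G M" and modN: "is_module G N" and f: "is_hom G M N f"
  shows "is_submodule G N (\<lambda>k. f k ` rsp M k)"
proof -
  interpret VM: vector_space "rsc M" using mod_vs[OF modM] .
  interpret VN: vector_space "rsc N" using mod_vs[OF modN] .
  show ?thesis
    unfolding is_submodule_def
  proof (intro conjI allI ballI)
    fix i
    have sub: "VM.subspace (rsp M i)" using mod_sub[OF modM] .
    have lin: "lin_on (rsc M) (rsc N) (rsp M i) (f i)" using hom_lin[OF f] .
    show "VN.subspace (f i ` rsp M i)"
    proof (rule VN.subspaceI)
      show "0 \<in> f i ` rsp M i" using lin_on_zero[OF mod_vs[OF modM] sub lin] VM.subspace_0[OF sub]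
        by (metis image_eqI)
    next
      fix x y assume "x \<in> f i ` rsp M i" "y \<in> f i ` rsp M i"
      then obtain u w where uw: "u \<in> rsp M i" "w \<in> rsp M i" "x = f i u" "y = f i w" by blast
      then have "x + y = f i (u + w)" using lin unfolding lin_on_def by simp
      moreover have "u + w \<in> rsp M i" using uw VM.subspace_add[OF sub] by blast
      ultimately show "x + y \<in> f i ` rsp M i" by blast
    next
      fix c x assume "x \<in> f i ` rsp M i"
      then obtain u where u: "u \<in> rsp M i" "x = f i u" by blast
      then have "rsc N c x = f i (rsc M c u)" using lin unfolding lin_on_def by simp
      moreover have "rsc M c u \<in> rsp M i" using u VM.subspace_scale[OF sub] by blast
      ultimately show "rsc N c x \<in> f i ` rsp M i" by blast
    qed
    show "f i ` rsp M i \<subseteq> rsp N i" using hom_img[OF f] .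
  next
    fix h assume h: "h \<in> garr G"
    show "rmap N h ` f (gsrc G h) ` rsp M (gsrc G h) \<subseteq> f (gtgt G h) ` rsp M (gtgt G h)"
    proof
      fix y assume "y \<in> rmap N h ` f (gsrc G h) ` rsp M (gsrc G h)"
      then obtain u where u: "u \<in> rsp M (gsrc G h)" "y = rmap N h (f (gsrc G h) u)" by blast
      then have "y = f (gtgt G h) (rmap M h u)" using hom_arr[OF f h u(1)] by simp
      moreover have "rmap M h u \<in> rsp M (gtgt G h)" using mod_arr[OF modM h] u by blast
      ultimately show "y \<in> f (gtgt G h) ` rsp M (gtgt G h)" by blast
    qed
  qed
qed

lemma kernel_submod:
  assumes modM: "is_module G M" and modN: "is_module G N" and f: "is_hom G M N f"
  shows "is_submodule G M (\<lambda>k. {x \<in> rsp M k. f k x = 0})"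
proof -
  interpret VM: vector_space "rsc M" using mod_vs[OF modM] .
  interpret VN: vector_space "rsc N" using mod_vs[OF modN] .
  show ?thesis
    unfolding is_submodule_def
  proof (intro conjI allI ballI)
    fix i
    have sub: "VM.subspace (rsp M i)" using mod_sub[OF modM] .
    have lin: "lin_on (rsc M) (rsc N) (rsp M i) (f i)" using hom_lin[OF f] .
    show "VM.subspace {x \<in> rsp M i. f i x = 0}"
    proof (rule VM.subspaceI)
      show "0 \<in> {x \<in> rsp M i. f i x = 0}"
        using lin_on_zero[OF mod_vs[OF modM] sub lin] VM.subspace_0[OF sub] by simp
    next
      fix x y assume "x \<in> {x \<in> rsp M i. f i x = 0}" "y \<in> {x \<in> rsp M i. f i x = 0}"
      then show "x + y \<in> {x \<in> rsp M i. f i x = 0}" using lin VM.subspace_add[OF sub] unfolding lin_on_def by simp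
    next
      fix c x assume "x \<in> {x \<in> rsp M i. f i x = 0}"
      then show "rsc M c x \<in> {x \<in> rsp M i. f i x = 0}"
        using lin VM.subspace_scale[OF sub] VN.scale_zero_right unfolding lin_on_def by simp
    qed
    show "{x \<in> rsp M i. f i x = 0} \<subseteq> rsp M i" by blast
  next
    fix h assume h: "h \<in> garr G"
    show "rmap M h ` {x \<in> rsp M (gsrc G h). f (gsrc G h) x = 0} \<subseteq> {x \<in> rsp M (gtgt G h). f (gtgt G h) x = 0}"
    proof
      fix y assume "y \<in> rmap M h ` {x \<in> rsp M (gsrc G h). f (gsrc G h) x = 0}"
      then obtain u where u: "u \<in> rsp M (gsrc G h)" "f (gsrc G h) u = 0" "y = rmap M h u" by blast
      have "f (gtgt G h) y = rmap N h 0" using hom_arr[OF f h u(1)] u by simp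
      also have "\<dots> = 0" using lin_on_zero[OF mod_vs[OF modN] mod_sub[OF modN] mod_lin[OF modN h]] .
      finally show "y \<in> {x \<in> rsp M (gtgt G h). f (gtgt G h) x = 0}" using mod_arr[OF modM h] u by blast
    qed
  qed
qed

lemma kernel_inj:
  assumes vs: "vector_space s" and sub: "module.subspace s S" and lin: "lin_on s t S f"
    and ker: "{x \<in> S. f x = 0} = {0}"
  shows "inj_on f S"
proof (rule inj_onI)
  interpret vector_space s by fact
  fix x y assume x: "x \<in> S" and y: "y \<in> S" and eq: "f x = f y"
  have "f (x - y) = 0" using lin_on_diff[OF vs sub lin x y] eq by simp
  moreover have "x - y \<in> S" using subspace_diff[OF sub x y] .
  ultimately have "x - y \<in> {x \<in> S. f x = 0}" by blast
  then show "x = y" using ker by simp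
qed

context hull_setup begin

theorem main:
  fixes X :: "('i,'h,'x::ab_group_add) rep" and f1 f2 :: "'i \<Rightarrow> 'x \<Rightarrow> 'i \<times> nat \<Rightarrow> 'q"
  assumes modX: "is_module G X" and m1: "is_mono G X E f1" and m2: "is_mono G X E f2"
  shows "\<exists>g. is_iso G E E g \<and> (\<forall>i. \<forall>v\<in>rsp X i. f2 i v = g i (f1 i v))"
proof -
  interpret VE: vector_space "rsc E" by (rule vsE)
  interpret VX: vector_space "rsc X" using mod_vs[OF modX] .
  have h1: "is_hom G X E f1" and inj1: "\<And>k. inj_on (f1 k) (rsp X k)" using m1 by (auto simp: is_mono_def)
  have h2: "is_hom G X E f2" and inj2: "\<And>k. inj_on (f2 k) (rsp X k)" using m2 by (auto simp: is_mono_def)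
  have subX: "VX.subspace (rsp X k)" for k using mod_sub[OF modX] .
  have subEk: "VE.subspace (rsp E k)" for k using subE .
  define Y1 where "Y1 = (\<lambda>k. f1 k ` rsp X k)"
  define Y2 where "Y2 = (\<lambda>k. f2 k ` rsp X k)"
  have sY1: "is_submodule G E Y1" unfolding Y1_def by (rule hom_image_submod[OF modX modE h1])
  have sY2: "is_submodule G E Y2" unfolding Y2_def by (rule hom_image_submod[OF modX modE h2])
  have subY1: "VE.subspace (Y1 k)" for k using submod_sub[OF sY1] .
  have subY2: "VE.subspace (Y2 k)" for k using submod_sub[OF sY2] .
  have Y1E: "Y1 k \<subseteq> rsp E k" for k using submod_le[OF sY1] .
  have Y2E: "Y2 k \<subseteq> rsp E k" for k using submod_le[OF sY2] .
  define \<theta> where "\<theta> = (\<lambda>k y. f2 k (inv_into (rsp X k) (f1 k) y))"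
  have thf: "\<theta> k (f1 k x) = f2 k x" if "x \<in> rsp X k" for k x
    using inj1 that by (simp add: \<theta>_def inv_into_f_f)
  have l1: "lin_on (rsc X) (rsc E) (rsp X k) (f1 k)" for k using hom_lin[OF h1] .
  have l2: "lin_on (rsc X) (rsc E) (rsp X k) (f2 k)" for k using hom_lin[OF h2] .
  have thlin: "lin_on (rsc E) (rsc E) (Y1 k) (\<theta> k)" for k
    unfolding lin_on_def
  proof (intro conjI ballI allI)
    fix a b assume "a \<in> Y1 k" "b \<in> Y1 k"
    then obtain x y where xy: "x \<in> rsp X k" "y \<in> rsp X k" "a = f1 k x" "b = f1 k y" by (auto simp: Y1_def)
    have "x + y \<in> rsp X k" using xy VX.subspace_add[OF subX] by blast
    moreover have "a + b = f1 k (x + y)" using xy l1[of k] unfolding lin_on_def by simp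
    ultimately show "\<theta> k (a + b) = \<theta> k a + \<theta> k b" using thf xy l2[of k] unfolding lin_on_def by simp
  next
    fix c a assume "a \<in> Y1 k"
    then obtain x where x: "x \<in> rsp X k" "a = f1 k x" by (auto simp: Y1_def)
    have "rsc X c x \<in> rsp X k" using x VX.subspace_scale[OF subX] by blast
    moreover have "rsc E c a = f1 k (rsc X c x)" using x l1[of k] unfolding lin_on_def by simp
    ultimately show "\<theta> k (rsc E c a) = rsc E c (\<theta> k a)" using thf x l2[of k] unfolding lin_on_def by simp
  qed
  have thbij: "bij_betw (\<theta> k) (Y1 k) (Y2 k)" for k
  proof -
    have "inj_on (\<theta> k) (Y1 k)"
    proof (rule inj_onI)
      fix a b assume "a \<in> Y1 k" "b \<in> Y1 k" "\<theta> k a = \<theta> k b"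
      then obtain x y where "x \<in> rsp X k" "y \<in> rsp X k" "a = f1 k x" "b = f1 k y" "f2 k x = f2 k y"
        using thf by (auto simp: Y1_def)
      then show "a = b" using inj2[of k] by (auto dest: inj_onD)
    qed
    moreover have "\<theta> k ` Y1 k = Y2 k" using thf by (force simp: Y1_def Y2_def image_iff)
    ultimately show ?thesis by (simp add: bij_betw_def)
  qed
  have tharr: "\<theta> (gtgt G h) (rmap E h y) = rmap E h (\<theta> (gsrc G h) y)" if h: "h \<in> garr G" and y: "y \<in> Y1 (gsrc G h)" for h y
  proof -
    obtain x where x: "x \<in> rsp X (gsrc G h)" "y = f1 (gsrc G h) x" using y by (auto simp: Y1_def)
    have xt: "rmap X h x \<in> rsp X (gtgt G h)" using mod_arr[OF modX h] x by blast
    have "rmap E h y = f1 (gtgt G h) (rmap X h x)" using hom_arr[OF h1 h x(1)] x by simp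
    then have "\<theta> (gtgt G h) (rmap E h y) = f2 (gtgt G h) (rmap X h x)" using thf[OF xt] by simp
    also have "\<dots> = rmap E h (f2 (gsrc G h) x)" using hom_arr[OF h2 h x(1)] .
    also have "\<dots> = rmap E h (\<theta> (gsrc G h) y)" using thf[OF x(1)] x by simp
    finally show ?thesis .
  qed
  have th0: "\<theta> k 0 = 0" for k using lin_on_zero[OF vsE subY1 thlin] .
  have rE0: "rmap E h 0 = 0" if "h \<in> garr G" for h using lin_on_zero[OF vsE subE linE[OF that]] .
  define S where "S = (\<lambda>k. {x \<in> rsp E k. killed k x})"
  have SE: "S k \<subseteq> rsp E k" for k by (auto simp: S_def)
  have subS: "VE.subspace (S k)" for k
  proof (rule VE.subspaceI)
    show "0 \<in> S k" using VE.subspace_0[OF subE] rE0 by (simp add: S_def killed_def)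
  next
    fix x y assume "x \<in> S k" "y \<in> S k"
    then show "x + y \<in> S k" using VE.subspace_add[OF subE] linE unfolding S_def killed_def lin_on_def
      by auto
  next
    fix c x assume "x \<in> S k"
    then show "rsc E c x \<in> S k" using VE.subspace_scale[OF subE] linE VE.scale_zero_right
      unfolding S_def killed_def lin_on_def by auto
  qed
  have Skill: "x \<in> S (gsrc G h) \<Longrightarrow> h \<in> garr G \<Longrightarrow> rmap E h x = 0" for x h
    by (simp add: S_def killed_def)
  define A where "A = (\<lambda>k. Y1 k \<inter> S k)"
  define A' where "A' = (\<lambda>k. Y2 k \<inter> S k)"
  have thA: "bij_betw (\<theta> k) (A k) (A' k)" for k
  proof -
    have "inj_on (\<theta> k) (Y1 k)" using thbij[of k] by (simp add: bij_betw_def)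
    then have "inj_on (\<theta> k) (A k)" by (rule inj_on_subset) (auto simp: A_def)
    moreover have "\<theta> k ` A k = A' k"
    proof
      show "\<theta> k ` A k \<subseteq> A' k"
      proof
        fix z assume "z \<in> \<theta> k ` A k"
        then obtain y where y: "y \<in> Y1 k" "y \<in> S k" "z = \<theta> k y" by (auto simp: A_def)
        have "z \<in> Y2 k" using thbij[of k] y by (auto simp: bij_betw_def)
        moreover have "killed k z" unfolding killed_def
        proof (intro ballI impI)
          fix h assume h: "h \<in> garr G" and "gsrc G h = k"
          then have "rmap E h z = \<theta> (gtgt G h) (rmap E h y)" using tharr[OF h] y by simp
          also have "\<dots> = 0" using Skill[of y h] y h \<open>gsrc G h = k\<close> th0 by simp
          finally show "rmap E h z = 0" .
        qed
        ultimately show "z \<in> A' k" using Y2E by (auto simp: A'_def S_def)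
      qed
      show "A' k \<subseteq> \<theta> k ` A k"
      proof
        fix z assume z: "z \<in> A' k"
        then obtain y where y: "y \<in> Y1 k" "z = \<theta> k y" using thbij[of k] by (auto simp: A'_def bij_betw_def)
        have "killed k y" unfolding killed_def
        proof (intro ballI impI)
          fix h assume h: "h \<in> garr G" and src: "gsrc G h = k"
          have yt: "rmap E h y \<in> Y1 (gtgt G h)" using submod_arr[OF sY1 h] y src by blast
          have "\<theta> (gtgt G h) (rmap E h y) = rmap E h z" using tharr[OF h] y src by simp
          also have "\<dots> = 0" using z src h by (simp add: A'_def S_def killed_def)
          finally have "\<theta> (gtgt G h) (rmap E h y) = \<theta> (gtgt G h) 0" using th0 by simp
          moreover have "0 \<in> Y1 (gtgt G h)" using VE.subspace_0[OF subY1] .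
          ultimately show "rmap E h y = 0" using thbij[of "gtgt G h"] yt by (auto simp: bij_betw_def dest: inj_onD)
        qed
        then have "y \<in> A k" using y Y1E by (auto simp: A_def S_def)
        then show "z \<in> \<theta> k ` A k" using y by blast
      qed
    qed
    ultimately show ?thesis by (simp add: bij_betw_def)
  qed
  have "\<forall>k. \<exists>\<tau>. lin_on (rsc E) (rsc E) (S k) \<tau> \<and> bij_betw \<tau> (S k) (S k) \<and> (\<forall>x\<in>A k. \<tau> x = \<theta> k x)"
  proof
    fix k
    show "\<exists>\<tau>. lin_on (rsc E) (rsc E) (S k) \<tau> \<and> bij_betw \<tau> (S k) (S k) \<and> (\<forall>x\<in>A k. \<tau> x = \<theta> k x)"
    proof (rule extend_iso[OF vsE subS])
      show "finite (delta k ` {..<a k})" by simp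
      show "S k \<subseteq> VE.span (delta k ` {..<a k})" using S_span by (auto simp: S_def)
      show "VE.subspace (A k)" unfolding A_def using VE.subspace_inter[OF subY1 subS] .
      show "A k \<subseteq> S k" by (auto simp: A_def)
      show "VE.subspace (A' k)" unfolding A'_def using VE.subspace_inter[OF subY2 subS] .
      show "A' k \<subseteq> S k" by (auto simp: A'_def)
      show "lin_on (rsc E) (rsc E) (A k) (\<theta> k)" using lin_on_mono[OF thlin] by (auto simp: A_def)
      show "bij_betw (\<theta> k) (A k) (A' k)" by (rule thA)
    qed
  qed
  then obtain \<tau> where tau: "\<And>k. lin_on (rsc E) (rsc E) (S k) (\<tau> k)" "\<And>k. bij_betw (\<tau> k) (S k) (S k)"
    "\<And>k x. x \<in> A k \<Longrightarrow> \<tau> k x = \<theta> k x" by metis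
  have tau0: "\<tau> k 0 = 0" for k using lin_on_zero[OF vsE subS tau(1)] .
  have tauS: "\<tau> k s \<in> S k" if "s \<in> S k" for k s using tau(2)[of k] that by (auto simp: bij_betw_def)
  define Z where "Z = (\<lambda>k. {y + s | y s. y \<in> Y1 k \<and> s \<in> S k})"
  have wd: "\<theta> k y + \<tau> k s = \<theta> k y' + \<tau> k s'"
    if "y \<in> Y1 k" "s \<in> S k" "y' \<in> Y1 k" "s' \<in> S k" "y + s = y' + s'" for k y s y' s'
  proof -
    have "y - y' = s' - s" using that(5) by (simp add: algebra_simps)
    moreover have "y - y' \<in> Y1 k" using that VE.subspace_diff[OF subY1] by blast
    moreover have "s' - s \<in> S k" using that VE.subspace_diff[OF subS] by blast
    ultimately have "\<theta> k (y - y') = \<tau> k (s' - s)" using tau(3)[of "y - y'" k] by (simp add: A_def)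
    moreover have "\<theta> k (y - y') = \<theta> k y - \<theta> k y'" using lin_on_diff[OF vsE subY1 thlin] that by blast
    moreover have "\<tau> k (s' - s) = \<tau> k s' - \<tau> k s" using lin_on_diff[OF vsE subS tau(1)] that by blast
    ultimately show ?thesis by (simp add: algebra_simps)
  qed
  define th' where "th' = (\<lambda>k z. SOME w. \<exists>y s. y \<in> Y1 k \<and> s \<in> S k \<and> z = y + s \<and> w = \<theta> k y + \<tau> k s)"
  have th'eq: "th' k (y + s) = \<theta> k y + \<tau> k s" if "y \<in> Y1 k" "s \<in> S k" for k y s
  proof -
    have ex: "\<exists>w. \<exists>y' s'. y' \<in> Y1 k \<and> s' \<in> S k \<and> y + s = y' + s' \<and> w = \<theta> k y' + \<tau> k s'" using that by blast
    have "\<exists>y' s'. y' \<in> Y1 k \<and> s' \<in> S k \<and> y + s = y' + s' \<and> th' k (y + s) = \<theta> k y' + \<tau> k s'"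
      unfolding th'_def using someI_ex[OF ex] .
    then show ?thesis using wd that by metis
  qed
  have thimg: "\<theta> k y \<in> rsp E k" if "y \<in> Y1 k" for k y using thbij[of k] Y2E that by (auto simp: bij_betw_def)
  have subZ: "is_submodule G E Z"
    unfolding is_submodule_def
  proof (intro conjI allI ballI)
    fix i show "VE.subspace (Z i)" unfolding Z_def by (rule VE.subspace_sums[OF subY1 subS])
    show "Z i \<subseteq> rsp E i"
    proof
      fix x assume "x \<in> Z i"
      then obtain y s where "y \<in> Y1 i" "s \<in> S i" "x = y + s" by (auto simp: Z_def)
      then show "x \<in> rsp E i" using Y1E SE VE.subspace_add[OF subE] by blast
    qed
  next
    fix h assume h: "h \<in> garr G"
    show "rmap E h ` Z (gsrc G h) \<subseteq> Z (gtgt G h)"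
    proof
      fix z assume "z \<in> rmap E h ` Z (gsrc G h)"
      then obtain y s where ys: "y \<in> Y1 (gsrc G h)" "s \<in> S (gsrc G h)" "z = rmap E h (y + s)" by (auto simp: Z_def)
      have "z = rmap E h y + rmap E h s" using linE[OF h] ys Y1E SE unfolding lin_on_def by blast
      then have "z = rmap E h y + 0" using Skill[OF ys(2) h] by simp
      moreover have "rmap E h y \<in> Y1 (gtgt G h)" using submod_arr[OF sY1 h] ys by blast
      moreover have "0 \<in> S (gtgt G h)" using VE.subspace_0[OF subS] .
      ultimately show "z \<in> Z (gtgt G h)" unfolding Z_def by blast
    qed
  qed
  have homth': "is_hom G (rsc E, Z, rmap E) E th'"
    unfolding is_hom_def rep_simps
  proof (intro conjI allI ballI)
    fix i
    show "lin_on (rsc E) (rsc E) (Z i) (th' i)"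
      unfolding lin_on_def
    proof (intro conjI allI ballI)
      fix x x' assume "x \<in> Z i" "x' \<in> Z i"
      then obtain y s y' s' where ys: "y \<in> Y1 i" "s \<in> S i" "x = y + s" "y' \<in> Y1 i" "s' \<in> S i" "x' = y' + s'"
        by (auto simp: Z_def)
      have "x + x' = (y + y') + (s + s')" using ys by (simp add: algebra_simps)
      moreover have "y + y' \<in> Y1 i" "s + s' \<in> S i" using ys VE.subspace_add[OF subY1] VE.subspace_add[OF subS] by auto
      ultimately have "th' i (x + x') = \<theta> i (y + y') + \<tau> i (s + s')" using th'eq by simp
      also have "\<dots> = (\<theta> i y + \<tau> i s) + (\<theta> i y' + \<tau> i s')"
        using thlin[of i] tau(1)[of i] ys unfolding lin_on_def by (simp add: algebra_simps)
      also have "\<dots> = th' i x + th' i x'" using th'eq ys by simp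
      finally show "th' i (x + x') = th' i x + th' i x'" .
    next
      fix c x assume "x \<in> Z i"
      then obtain y s where ys: "y \<in> Y1 i" "s \<in> S i" "x = y + s" by (auto simp: Z_def)
      have "rsc E c x = rsc E c y + rsc E c s" using ys VE.scale_right_distrib by simp
      moreover have "rsc E c y \<in> Y1 i" "rsc E c s \<in> S i" using ys VE.subspace_scale[OF subY1] VE.subspace_scale[OF subS] by auto
      ultimately have "th' i (rsc E c x) = \<theta> i (rsc E c y) + \<tau> i (rsc E c s)" using th'eq by simp
      also have "\<dots> = rsc E c (\<theta> i y + \<tau> i s)"
        using thlin[of i] tau(1)[of i] ys VE.scale_right_distrib unfolding lin_on_def by simp
      also have "\<dots> = rsc E c (th' i x)" using th'eq ys by simp
      finally show "th' i (rsc E c x) = rsc E c (th' i x)" .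
    qed
    show "th' i ` Z i \<subseteq> rsp E i"
    proof
      fix w assume "w \<in> th' i ` Z i"
      then obtain y s where ys: "y \<in> Y1 i" "s \<in> S i" "w = th' i (y + s)" by (auto simp: Z_def)
      then have "w = \<theta> i y + \<tau> i s" using th'eq by simp
      then show "w \<in> rsp E i" using thimg[OF ys(1)] tauS[OF ys(2)] SE VE.subspace_add[OF subE] by blast
    qed
  next
    fix h x assume h: "h \<in> garr G" and x: "x \<in> Z (gsrc G h)"
    then obtain y s where ys: "y \<in> Y1 (gsrc G h)" "s \<in> S (gsrc G h)" "x = y + s" by (auto simp: Z_def)
    have "rmap E h x = rmap E h y + rmap E h s" using linE[OF h] ys Y1E SE unfolding lin_on_def by blast
    then have rx: "rmap E h x = rmap E h y + 0" using Skill[OF ys(2) h] by simp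
    have yt: "rmap E h y \<in> Y1 (gtgt G h)" using submod_arr[OF sY1 h] ys by blast
    have zt: "0 \<in> S (gtgt G h)" using VE.subspace_0[OF subS] .
    have "th' (gtgt G h) (rmap E h x) = \<theta> (gtgt G h) (rmap E h y) + \<tau> (gtgt G h) 0"
      using th'eq[OF yt zt] rx by simp
    also have "\<dots> = rmap E h (\<theta> (gsrc G h) y)" using tharr[OF h ys(1)] tau0 by simp
    also have "\<dots> = rmap E h (\<theta> (gsrc G h) y) + rmap E h (\<tau> (gsrc G h) s)"
      using Skill[OF tauS[OF ys(2)] h] by simp
    also have "\<dots> = rmap E h (\<theta> (gsrc G h) y + \<tau> (gsrc G h) s)"
    proof -
      have "\<tau> (gsrc G h) s \<in> rsp E (gsrc G h)" using tauS[OF ys(2)] SE by blast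
      then show ?thesis using linE[OF h] thimg[OF ys(1)] unfolding lin_on_def by simp
    qed
    also have "\<dots> = rmap E h (th' (gsrc G h) x)" using th'eq ys by simp
    finally show "th' (gtgt G h) (rmap E h x) = rmap E h (th' (gsrc G h) x)" .
  qed
  obtain g where g: "is_hom G E E g" "\<And>k x. x \<in> Z k \<Longrightarrow> g k x = th' k x"
    using ext_E[OF subZ homth'] by blast
  have S0: "0 \<in> S k" "0 \<in> Y1 k" for k using VE.subspace_0[OF subS] VE.subspace_0[OF subY1] by auto
  have gY: "g k y = \<theta> k y" if "y \<in> Y1 k" for k y
  proof -
    have "y + 0 \<in> Z k" using that S0 unfolding Z_def by blast
    then show ?thesis using g(2) th'eq[OF that S0(1)] tau0 by simp
  qed
  have gS: "g k s = \<tau> k s" if "s \<in> S k" for k s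
  proof -
    have "0 + s \<in> Z k" using that S0 unfolding Z_def by blast
    then show ?thesis using g(2) th'eq[OF S0(2) that] th0 by simp
  qed
  have glin: "lin_on (rsc E) (rsc E) (rsp E k) (g k)" for k using hom_lin[OF g(1)] .
  have kerg: "{x \<in> rsp E k. g k x = 0} = {0}" for k
  proof (rule ccontr)
    assume "{x \<in> rsp E k. g k x = 0} \<noteq> {0}"
    then have "\<exists>i. {x \<in> rsp E i. g i x = 0} \<noteq> {0}" by blast
    then obtain i x where x: "x \<in> {x \<in> rsp E i. g i x = 0}" "x \<noteq> 0" "killed i x"
      using ess_E[OF kernel_submod[OF modE modE g(1)]] by blast
    have xS: "x \<in> S i" using x by (simp add: S_def)
    have "\<tau> i x = \<tau> i 0" using gS[OF xS] x tau0 by simp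
    then have "x = 0" using tau(2)[of i] xS S0(1) by (auto simp: bij_betw_def dest: inj_onD)
    then show False using x(2) by simp
  qed
  have ginj: "inj_on (g k) (rsp E k)" for k by (rule kernel_inj[OF vsE subE glin kerg])
  define gE where "gE = (\<lambda>k. g k ` rsp E k)"
  have sgE: "is_submodule G E gE" unfolding gE_def by (rule hom_image_submod[OF modE modE g(1)])
  define h0 where "h0 = (\<lambda>k y. inv_into (rsp E k) (g k) y)"
  have h0g: "h0 k (g k x) = x" if "x \<in> rsp E k" for k x using ginj that by (simp add: h0_def inv_into_f_f)
  have homh0: "is_hom G (rsc E, gE, rmap E) E h0"
    unfolding is_hom_def rep_simps
  proof (intro conjI allI ballI)
    fix i
    show "lin_on (rsc E) (rsc E) (gE i) (h0 i)"
      unfolding lin_on_def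
    proof (intro conjI allI ballI)
      fix a b assume "a \<in> gE i" "b \<in> gE i"
      then obtain x y where xy: "x \<in> rsp E i" "y \<in> rsp E i" "a = g i x" "b = g i y" by (auto simp: gE_def)
      have "x + y \<in> rsp E i" using xy VE.subspace_add[OF subE] by blast
      moreover have "a + b = g i (x + y)" using xy glin[of i] unfolding lin_on_def by simp
      ultimately show "h0 i (a + b) = h0 i a + h0 i b" using h0g xy by simp
    next
      fix c a assume "a \<in> gE i"
      then obtain x where x: "x \<in> rsp E i" "a = g i x" by (auto simp: gE_def)
      have "rsc E c x \<in> rsp E i" using x VE.subspace_scale[OF subE] by blast
      moreover have "rsc E c a = g i (rsc E c x)" using x glin[of i] unfolding lin_on_def by simp
      ultimately show "h0 i (rsc E c a) = rsc E c (h0 i a)" using h0g x by simp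
    qed
    show "h0 i ` gE i \<subseteq> rsp E i" using h0g by (auto simp: gE_def)
  next
    fix h y assume h: "h \<in> garr G" and y: "y \<in> gE (gsrc G h)"
    then obtain x where x: "x \<in> rsp E (gsrc G h)" "y = g (gsrc G h) x" by (auto simp: gE_def)
    have xt: "rmap E h x \<in> rsp E (gtgt G h)" using arrE[OF h] x by blast
    have "rmap E h y = g (gtgt G h) (rmap E h x)" using hom_arr[OF g(1) h x(1)] x by simp
    then show "h0 (gtgt G h) (rmap E h y) = rmap E h (h0 (gsrc G h) y)" using h0g[OF xt] h0g[OF x(1)] x by simp
  qed
  obtain hh where hh: "is_hom G E E hh" "\<And>k y. y \<in> gE k \<Longrightarrow> hh k y = h0 k y"
    using ext_E[OF sgE homh0] by blast
  have hhg: "hh k (g k x) = x" if "x \<in> rsp E k" for k x using hh(2)[of "g k x" k] h0g that by (auto simp: gE_def)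
  have hhlin: "lin_on (rsc E) (rsc E) (rsp E k) (hh k)" for k using hom_lin[OF hh(1)] .
  have gimg: "g k x \<in> rsp E k" if "x \<in> rsp E k" for k x using hom_img[OF g(1)] that by blast
  have hhimg: "hh k x \<in> rsp E k" if "x \<in> rsp E k" for k x using hom_img[OF hh(1)] that by blast
  have kerhh: "{x \<in> rsp E k. hh k x = 0} = {0}" for k
  proof (rule ccontr)
    assume "{x \<in> rsp E k. hh k x = 0} \<noteq> {0}"
    then have "\<exists>i. {x \<in> rsp E i. hh i x = 0} \<noteq> {0}" by blast
    then obtain i x where x: "x \<in> {x \<in> rsp E i. hh i x = 0}" "x \<noteq> 0" "killed i x"
      using ess_E[OF kernel_submod[OF modE modE hh(1)]] by blast
    have xS: "x \<in> S i" using x by (simp add: S_def)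
    then obtain s where s: "s \<in> S i" "x = \<tau> i s" using tau(2)[of i] by (auto simp: bij_betw_def)
    have "x = g i s" using gS[OF s(1)] s by simp
    then have "hh i x = s" using hhg SE s(1) by blast
    then have "s = 0" using x by simp
    then have "x = 0" using s tau0 by simp
    then show False using x(2) by simp
  qed
  have gsurj: "g k ` rsp E k = rsp E k" for k
  proof
    show "g k ` rsp E k \<subseteq> rsp E k" using gimg by blast
    show "rsp E k \<subseteq> g k ` rsp E k"
    proof
      fix y assume y: "y \<in> rsp E k"
      have hy: "hh k y \<in> rsp E k" using hhimg[OF y] .
      have gy: "g k (hh k y) \<in> rsp E k" using gimg[OF hy] .
      have "hh k (y - g k (hh k y)) = hh k y - hh k (g k (hh k y))"
        using lin_on_diff[OF vsE subE hhlin y gy] .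
      also have "\<dots> = 0" using hhg[OF hy] by simp
      finally have "y - g k (hh k y) \<in> {x \<in> rsp E k. hh k x = 0}"
        using VE.subspace_diff[OF subE y gy] by blast
      then have "y = g k (hh k y)" using kerhh by simp
      then show "y \<in> g k ` rsp E k" using hy by blast
    qed
  qed
  have "is_iso G E E g" unfolding is_iso_def using g(1) ginj gsurj by (simp add: bij_betw_def)
  moreover have "f2 i v = g i (f1 i v)" if "v \<in> rsp X i" for i v
  proof -
    have "f1 i v \<in> Y1 i" using that by (simp add: Y1_def)
    then show ?thesis using gY thf[OF that] by simp
  qed
  ultimately show ?thesis by blast
qed

end

theorem mainTheorem1:
  fixes G :: "('i::finite,'h) graph"
    and Q :: "'i \<Rightarrow> ('i,'h,'q::ab_group_add) rep"
    and \<iota> :: "'i \<Rightarrow> 'i \<Rightarrow> complex \<Rightarrow> 'q"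
    and a :: "'i \<Rightarrow> nat"
    and X :: "('i,'h,'x::ab_group_add) rep"
    and f1 f2 :: "'i \<Rightarrow> 'x \<Rightarrow> 'i \<times> nat \<Rightarrow> 'q"
  assumes "double_graph G"
    and "\<And>i. is_injective_hull G (simple_mod i) (Q i) (\<iota> i)"
    and "is_module G X"
    and "findim_module X"
    and "\<exists>u. is_mono G X (dsum_mod Q a) u"
    and "is_mono G X (dsum_mod Q a) f1"
    and "is_mono G X (dsum_mod Q a) f2"
  shows "\<exists>g. is_iso G (dsum_mod Q a) (dsum_mod Q a) g \<and>
             (\<forall>i. \<forall>v\<in>rsp X i. f2 i v = g i (f1 i v))"
proof -
  interpret hull_setup G Q \<iota> a using assms(1,2) by unfold_locales
  show ?thesis by (rule main[OF assms(3) assms(6) assms(7)])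
qed

end
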